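(* Over $\mathsf{G}_{r,n}$, the tuple of (set-valued) statistics $$\bigl(\ell,\mathsf{Rmil}^0,\mathsf{Rmil}^1,\dots,\mathsf{Rmil}^{r-1},\mathsf{Lmil}^0,\dots,\mathsf{Lmil}^{r-1},\mathsf{Lmal}^0,\dots,\mathsf{Lmal}^{r-1},\mathsf{Lmap}^0,\dots,\mathsf{Lmap}^{r-1}\bigr)$$ and the tuple $$\bigl(\mathsf{sor},\mathsf{Cyc}^0,\mathsf{Cyc}^{r-1},\dots,\mathsf{Cyc}^{1},\mathsf{Lmic}^0,\mathsf{Lmic}^{r-1},\dots,\mathsf{Lmic}^1,\mathsf{Lmal}^0,\mathsf{Lmal}^{r-1},\dots,\mathsf{Lmal}^1,\mathsf{Lmap}^0,\mathsf{Lmap}^{r-1},\dots,\mathsf{Lmap}^1\bigr)$$ have the same joint distribution: for every possible value $v$, the number of $\pi\in\mathsf{G}_{r,n}$ at which the first tuple equals $v$ equals the number of $\pi\in\mathsf{G}_{r,n}$ at which the second tuple equals $v$.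
   Context: $\mathsf{G}_{r,n}=C_r\wr\mathfrak S_n$: pairs $(\sigma,\mathbf z)$, $\sigma\in\mathfrak S_n$, $\mathbf z\in(\mathbb Z/r)^n$, written $\pi=\sigma_1^{[z_1]}\cdots\sigma_n^{[z_n]}$ (colors in $\{0,\dots,r-1\}$, read mod $r$); product $(\sigma,\mathbf z)(\rho,\mathbf w)=(\sigma\rho,\mathbf w+\rho(\mathbf z))$ with $\rho(\mathbf z)=(z_{\rho(1)},\dots,z_{\rho(n)})$; $\pi$ acts on $\{i^{[t]}\}$ by $\pi(i^{[t]})=\sigma_i^{[z_i+t]}$, $i^{[0]}=i$. $\ell(\pi)$: minimal number of factors in an expression of $\pi$ as a product of $s_0=1^{[1]}2\cdots n$ and $s_i$ ($1\le i<n$: base permutation $(i\ i+1)$, all colors $0$). $\mathsf{sor}(\pi)$ (sorting index): set $\pi^{(n)}=\pi$; for $j=n,\dots,1$ let $c_j$ be the position of the letter with base value $j$ in the length-$j$ word $\pi^{(j)}=\tau_1^{[y_1]}\cdots\tau_j^{[y_j]}$, $z$ its color, $e_j\in\{0,\dots,r-1\}$ with $e_j\equiv-z$; if $c_j<j$, $\pi^{(j-1)}$ is obtained by replacing the letter at position $c_j$ by $\tau_j^{[y_j-e_j]}$ and deleting the last letter; if $c_j=j$ it is obtained by deleting the last letter. Then $\mathsf{sor}(\pi)=\sum_j\bigl(j-c_j+\chi(e_j>0)(2(c_j-1)+e_j)\bigr)$, $\chi$ the indicator. Statistics: $\mathsf{Rmil}(\pi)=\{\sigma_i^{[z_i]}:\sigma_i<\sigma_j\,\forall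 j>i\}$, $\mathsf{Lmil}(\pi)=\{\sigma_i^{[z_i]}:\sigma_i<\sigma_j\,\forall j<i\}$, $\mathsf{Lmal}(\pi)=\{\sigma_i^{[z_i]}:\sigma_i>\sigma_j\,\forall j<i\}$, $\mathsf{Lmap}(\pi)=\{i^{[z_i]}:\sigma_i>\sigma_j\,\forall j<i\}$; $\mathsf{Cyc}(\pi)$ = set of $\alpha^{[c]}$ over cycles of $\sigma$ with element set $B$, $\alpha=\min B$, $c\equiv\sum_{k\in B}z_k\pmod r$; $\mathsf{Lmic}(\pi)$ = set of letters of the word $\pi(1)\pi^2(1)\cdots\pi^m(1)$ ($m\ge1$ least with $\pi^m(1)=1$) whose base value is smaller than the base values of all earlier letters. For a set $S$ of colored letters, $S^t=\{k:k^{[t]}\in S\}$. *)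

theory Defs
  imports "HOL-Combinatorics.Permutations"
begin

text \<open>An element of G(r,n) = C_r wr S_n is a pair (sigma, z): sigma a permutation of
  {1..n} (identity outside), z the colour vector with z i in {0..r-1} for i in {1..n}
  and z i = 0 outside {1..n}.  Letters (coloured values) are pairs (value, colour).\<close>

type_synonym cperm = "(nat \<Rightarrow> nat) \<times> (nat \<Rightarrow> nat)"

definition G :: "nat \<Rightarrow> nat \<Rightarrow> cperm set" where
  "G r n = {(\<sigma>, z). \<sigma> permutes {1..n} \<and> (\<forall>i. z i < r) \<and> (\<forall>i. i \<notin> {1..n} \<longrightarrow> z i = 0)}"

definition cmult :: "nat \<Rightarrow> cperm \<Rightarrow> cperm \<Rightarrow> cperm" where
  "cmult r p q = (fst p \<circ> fst q, \<lambda>i. (snd q i + snd p (fst q i)) mod r)"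

definition cone :: cperm where
  "cone = (id, \<lambda>_. 0)"

definition gen0 :: "nat \<Rightarrow> cperm" where
  "gen0 r = (id, \<lambda>i. if i = 1 then 1 mod r else 0)"

definition geni :: "nat \<Rightarrow> cperm" where
  "geni i = ((\<lambda>x. if x = i then i + 1 else if x = i + 1 then i else x), \<lambda>_. 0)"

definition gens :: "nat \<Rightarrow> nat \<Rightarrow> cperm set" where
  "gens r n = (if 1 \<le> n then {gen0 r} else {}) \<union> {geni i | i. 1 \<le> i \<and> i < n}"

definition clength :: "nat \<Rightarrow> nat \<Rightarrow> cperm \<Rightarrow> nat" where
  "clength r n p = (LEAST k. \<exists>ws. length ws = k \<and> set ws \<subseteq> gens r n \<and> foldr (cmult r) ws cone = p)"

text \<open>Sorting index.  sor_aux r j tau y processes the word tau_1^[y_1] ... tau_j^[y_j].\<close>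
fun sor_aux :: "nat \<Rightarrow> nat \<Rightarrow> (nat \<Rightarrow> nat) \<Rightarrow> (nat \<Rightarrow> nat) \<Rightarrow> nat" where
  "sor_aux r 0 \<tau> y = 0"
| "sor_aux r (Suc j') \<tau> y =
     (let j = Suc j';
          c = (THE c. c \<in> {1..j} \<and> \<tau> c = j);
          e = (r - y c mod r) mod r;
          \<tau>' = (if c < j then \<tau>(c := \<tau> j) else \<tau>);
          y' = (if c < j then y(c := (y j + r - e) mod r) else y)
      in (j - c + (if e > 0 then 2 * (c - 1) + e else 0)) + sor_aux r j' \<tau>' y')"

definition sor :: "nat \<Rightarrow> nat \<Rightarrow> cperm \<Rightarrow> nat" where
  "sor r n p = sor_aux r n (fst p) (snd p)"

definition Rmil :: "nat \<Rightarrow> cperm \<Rightarrow> (nat \<times> nat) set" where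
  "Rmil n p = {(fst p i, snd p i) | i. i \<in> {1..n} \<and> (\<forall>j \<in> {i<..n}. fst p i < fst p j)}"

definition Lmil :: "nat \<Rightarrow> cperm \<Rightarrow> (nat \<times> nat) set" where
  "Lmil n p = {(fst p i, snd p i) | i. i \<in> {1..n} \<and> (\<forall>j \<in> {1..<i}. fst p i < fst p j)}"

definition Lmal :: "nat \<Rightarrow> cperm \<Rightarrow> (nat \<times> nat) set" where
  "Lmal n p = {(fst p i, snd p i) | i. i \<in> {1..n} \<and> (\<forall>j \<in> {1..<i}. fst p i > fst p j)}"

definition Lmap :: "nat \<Rightarrow> cperm \<Rightarrow> (nat \<times> nat) set" where
  "Lmap n p = {(i, snd p i) | i. i \<in> {1..n} \<and> (\<forall>j \<in> {1..<i}. fst p i > fst p j)}"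

definition corbit :: "(nat \<Rightarrow> nat) \<Rightarrow> nat \<Rightarrow> nat set" where
  "corbit \<sigma> i = {(\<sigma> ^^ k) i | k. True}"

definition Cyc :: "nat \<Rightarrow> nat \<Rightarrow> cperm \<Rightarrow> (nat \<times> nat) set" where
  "Cyc r n p = {(Min (corbit (fst p) i), (\<Sum>k \<in> corbit (fst p) i. snd p k) mod r) | i. i \<in> {1..n}}"

definition cact :: "nat \<Rightarrow> cperm \<Rightarrow> nat \<times> nat \<Rightarrow> nat \<times> nat" where
  "cact r p a = (fst p (fst a), (snd p (fst a) + snd a) mod r)"

definition Lmic :: "nat \<Rightarrow> cperm \<Rightarrow> (nat \<times> nat) set" where
  "Lmic r p =
     (let m = (LEAST m. 1 \<le> m \<and> (cact r p ^^ m) (1, 0) = (1, 0))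
      in {(cact r p ^^ k) (1, 0) | k. 1 \<le> k \<and> k \<le> m \<and>
            (\<forall>l. 1 \<le> l \<and> l < k \<longrightarrow> fst ((cact r p ^^ k) (1, 0)) < fst ((cact r p ^^ l) (1, 0)))})"

definition colsec :: "(nat \<times> nat) set \<Rightarrow> nat \<Rightarrow> nat set" where
  "colsec S t = {k. (k, t) \<in> S}"

end

theory Submission
  imports Defs
begin

lemma G_D:
  assumes "p \<in> G r n"
  shows "fst p permutes {1..n}" "\<And>i. snd p i < r" "\<And>i. i \<notin> {1..n} \<Longrightarrow> snd p i = 0"
  using assms by (auto simp: G_def split: prod.splits)

lemma G_I:
  assumes "fst p permutes {1..n}" "\<And>i. snd p i < r" "\<And>i. i \<notin> {1..n} \<Longrightarrow> snd p i = 0"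
  shows "p \<in> G r n"
  using assms by (cases p) (auto simp: G_def)

lemma perm_out: "\<sigma> permutes {1..n} \<Longrightarrow> i \<notin> {1..n} \<Longrightarrow> \<sigma> i = i"
  by (simp add: permutes_not_in)

lemma perm_in: "\<sigma> permutes {1..n} \<Longrightarrow> i \<in> {1..n} \<Longrightarrow> \<sigma> i \<in> {1..n}"
  by (metis permutes_in_image)

lemma perm_inj: "\<sigma> permutes S \<Longrightarrow> \<sigma> a = \<sigma> b \<Longrightarrow> a = b"
  using permutes_inj by (metis injD)

lemma perm_ex: assumes "\<sigma> permutes {1..n}" "v \<in> {1..n}" shows "\<exists>a\<in>{1..n}. \<sigma> a = v"
proof -
  have "v \<in> \<sigma> ` {1..n}" using assms permutes_image by metis
  then show ?thesis by auto
qed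

lemma cone_G: "cone \<in> G r n" if "1 \<le> r"
  using that by (auto simp: G_def cone_def permutes_id)

lemma cmult_G: assumes "p \<in> G r n" "q \<in> G r n" "1 \<le> r" shows "cmult r p q \<in> G r n"
proof (rule G_I)
  show "fst (cmult r p q) permutes {1..n}"
    using G_D(1)[OF assms(1)] G_D(1)[OF assms(2)] by (simp add: cmult_def permutes_compose)
  show "snd (cmult r p q) i < r" for i using assms(3) by (simp add: cmult_def)
  show "snd (cmult r p q) i = 0" if "i \<notin> {1..n}" for i
    using that G_D[OF assms(1)] G_D[OF assms(2)] perm_out[OF G_D(1)[OF assms(2)] that]
    by (simp add: cmult_def)
qed

definition swp :: "nat \<Rightarrow> nat \<Rightarrow> nat" where
  "swp i x = (if x = i then i + 1 else if x = i + 1 then i else x)"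

lemma geni_swp: "geni i = (swp i, \<lambda>_. 0)" by (simp add: geni_def swp_def[abs_def])

lemma swp_perm: assumes "1 \<le> i" "i < n" shows "swp i permutes {1..n}"
proof (rule inj_imp_permutes)
  show "inj_on (swp i) {1..n}" by (auto simp: inj_on_def swp_def split: if_splits)
qed (use assms in \<open>auto simp: swp_def\<close>)

lemma gens_G: assumes "1 \<le> r" "g \<in> gens r n" shows "g \<in> G r n"
proof -
  have "g = gen0 r \<and> 1 \<le> n \<or> (\<exists>i. g = geni i \<and> 1 \<le> i \<and> i < n)"
    using assms(2) by (auto simp: gens_def split: if_splits)
  then show ?thesis
  proof
    assume "g = gen0 r \<and> 1 \<le> n" then show ?thesis using assms(1)
      by (auto simp: gen0_def G_def permutes_id)
  next
    assume "\<exists>i. g = geni i \<and> 1 \<le> i \<and> i < n"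
    then obtain i where "g = geni i" "1 \<le> i" "i < n" by blast
    then show ?thesis using swp_perm[of i n] assms(1) by (simp add: geni_swp G_def)
  qed
qed

lemma foldr_G: assumes "1 \<le> r" "set ws \<subseteq> gens r n" shows "foldr (cmult r) ws cone \<in> G r n"
  using assms(2) by (induction ws) (auto intro: cmult_G gens_G cone_G assms(1))

lemma mult_geni: assumes "p \<in> G r n" shows "cmult r (geni i) p = (swp i \<circ> fst p, snd p)"
  using G_D(2)[OF assms] by (auto simp: cmult_def geni_swp)

lemma mult_gen0: assumes "p \<in> G r n"
  shows "cmult r (gen0 r) p = (fst p, \<lambda>k. if fst p k = 1 then (snd p k + 1) mod r else snd p k)"
  using G_D(2)[OF assms] by (auto simp: cmult_def gen0_def mod_add_right_eq)

definition key :: "cperm \<Rightarrow> nat \<Rightarrow> int" where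
  "key p a = (if snd p a = 0 then int (fst p a) else - int (fst p a))"

definition invs :: "nat \<Rightarrow> cperm \<Rightarrow> (nat \<times> nat) set" where
  "invs n p = {(a,b). a \<in> {1..n} \<and> b \<in> {1..n} \<and> a < b \<and> key p b < key p a}"

definition csum :: "nat \<Rightarrow> cperm \<Rightarrow> nat" where
  "csum n p = (\<Sum>a\<in>{1..n}. if snd p a = 0 then 0 else fst p a + snd p a - 1)"

definition lenf :: "nat \<Rightarrow> cperm \<Rightarrow> nat" where
  "lenf n p = card (invs n p) + csum n p"

lemma finite_invs: "finite (invs n p)"
  by (rule finite_subset[of _ "{1..n} \<times> {1..n}"]) (auto simp: invs_def)

lemma lenf_cone: "lenf n cone = 0"
proof -
  have "invs n cone = {}" by (auto simp: invs_def cone_def key_def)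
  then show ?thesis by (simp add: lenf_def csum_def cone_def)
qed

definition Dsc :: "nat \<Rightarrow> nat \<Rightarrow> cperm \<Rightarrow> bool" where
 "Dsc n i p = (\<exists>a b. a\<in>{1..n} \<and> b\<in>{1..n} \<and> fst p a = i \<and> fst p b = i+1 \<and>
    ((snd p a = 0 \<and> snd p b = 0 \<and> b < a) \<or> (snd p a = 0 \<and> snd p b > 0) \<or> (snd p a > 0 \<and> snd p b > 0 \<and> a < b)))"

definition sg :: "nat \<Rightarrow> nat \<Rightarrow> int" where "sg c x = (if c = 0 then int x else - int x)"

lemma key_sg: "key p a = sg (snd p a) (fst p a)" by (simp add: key_def sg_def)

lemma cmp_swap: assumes "i \<ge> 1" "u \<ge> 1" "v \<ge> 1" "\<not> (u = i \<and> v = i+1)" "\<not> (u = i+1 \<and> v = i)"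
  shows "(sg c (swp i v) < sg d (swp i u)) \<longleftrightarrow> (sg c v < sg d u)"
  using assms unfolding sg_def swp_def by (cases "c = 0"; cases "d = 0"; cases "u = i"; cases "u = i+1"; cases "v = i"; cases "v = i+1") auto

lemma sum_two: assumes "finite A" "a \<in> A" "b \<in> A" "a \<noteq> b"
  shows "sum f A = f a + f b + sum f (A - {a,b})"
proof -
  have "sum f A = f a + sum f (A - {a})" using assms by (simp add: sum.remove)
  also have "sum f (A - {a}) = f b + sum f (A - {a} - {b})" using assms by (intro sum.remove) auto
  finally show ?thesis by (simp add: insert_commute Diff_insert2[symmetric] algebra_simps)
qed

lemma card_rm: assumes "finite A" "finite B" "A - {x} = B - {x}"
  shows "card A + (if x \<in> B then 1 else 0) = card B + (if x \<in> A then 1 else 0)"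
proof -
  have "card (A - {x}) = card (B - {x})" using assms(3) by simp
  then show ?thesis using assms(1,2) using card_gt_0_iff[of A] card_gt_0_iff[of B]
    by (cases "x \<in> A"; cases "x \<in> B") (auto simp: card_Diff_singleton_if)
qed

lemma swap_lenf:
  assumes pG: "p \<in> G r n" and i: "1 \<le> i" "i < n" and D: "Dsc n i p"
  shows "lenf n p = lenf n (cmult r (geni i) p) + 1"
proof -
  let ?s = "fst p" and ?z = "snd p"
  define q where "q = cmult r (geni i) p"
  have q: "q = (swp i \<circ> ?s, ?z)" using mult_geni[OF pG] by (simp add: q_def)
  have perm: "?s permutes {1..n}" using G_D(1)[OF pG] .
  obtain a b where ab: "a\<in>{1..n}" "b\<in>{1..n}" "?s a = i" "?s b = i+1"
    and cases: "(?z a = 0 \<and> ?z b = 0 \<and> b < a) \<or> (?z a = 0 \<and> ?z b > 0) \<or> (?z a > 0 \<and> ?z b > 0 \<and> a < b)"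
    using D by (auto simp: Dsc_def)
  have anb: "a \<noteq> b" using ab by auto
  have s1: "?s x \<ge> 1" if "x \<in> {1..n}" for x using perm_in[OF perm that] by auto
  have kq: "key q x = sg (?z x) (swp i (?s x))" for x by (simp add: q key_sg)
  have cmp: "key q y < key q x \<longleftrightarrow> key p y < key p x"
    if "x \<in> {1..n}" "y \<in> {1..n}" "\<not> (x = a \<and> y = b)" "\<not> (x = b \<and> y = a)" for x y
  proof -
    have "\<not> (?s x = i \<and> ?s y = i+1)" "\<not> (?s x = i+1 \<and> ?s y = i)"
      using that ab perm_inj[OF perm] by auto
    then show ?thesis using cmp_swap[OF i(1) s1[OF that(1)] s1[OF that(2)], of "snd p y" "snd p x"] by (simp add: key_sg q)
  qed
  define pr where "pr = (min a b, max a b)"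
  have eqd: "invs n q - {pr} = invs n p - {pr}"
  proof -
    have "(x,y) \<in> invs n q \<longleftrightarrow> (x,y) \<in> invs n p" if "(x,y) \<noteq> pr" for x y
    proof -
      have "x < y \<Longrightarrow> \<not> (x = a \<and> y = b) \<and> \<not> (x = b \<and> y = a)" using that anb
        by (auto simp: pr_def min_def max_def)
      then have "x \<in> {1..n} \<Longrightarrow> y \<in> {1..n} \<Longrightarrow> x < y \<Longrightarrow> (key q y < key q x \<longleftrightarrow> key p y < key p x)"
        using cmp[of x y] by blast
      then show ?thesis unfolding invs_def by blast
    qed
    then show ?thesis by auto
  qed
  have cq: "snd q x = ?z x" for x by (simp add: q)
  have fq: "fst q x = swp i (?s x)" for x by (simp add: q)
  define t where "t = (\<lambda>(p::cperm) (x::nat). if snd p x = 0 then 0 else fst p x + snd p x - (1::nat))"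
  have csum_split: "csum n p' = t p' a + t p' b + sum (t p') ({1..n} - {a,b})" for p'
  proof -
    have "csum n p' = sum (t p') {1..n}" unfolding csum_def t_def by simp
    then show ?thesis using sum_two[of "{1..n}" a b "t p'"] ab anb by simp
  qed
  have rest: "sum (t q) ({1..n} - {a,b}) = sum (t p) ({1..n} - {a,b})"
  proof (rule sum.cong)
    fix x assume "x \<in> {1..n} - {a,b}"
    then have "?s x \<noteq> i" "?s x \<noteq> i+1" using ab perm_inj[OF perm] by auto
    then show "t q x = t p x" by (simp add: t_def cq fq swp_def)
  qed simp
  have fa: "fst q a = i+1" "fst q b = i" using ab by (simp_all add: fq swp_def)
  have ka: "key p a = sg (?z a) i" "key p b = sg (?z b) (i+1)" "key q a = sg (?z a) (i+1)" "key q b = sg (?z b) i"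
    using ab fa by (simp_all add: key_sg cq)
  have fin: "finite (invs n p)" "finite (invs n q)" by (simp_all add: finite_invs)
  have C: "card (invs n q) + (if pr \<in> invs n p then 1 else 0) = card (invs n p) + (if pr \<in> invs n q then 1 else 0)"
    using card_rm[OF fin(2) fin(1) eqd] .
  have memp: "pr \<in> invs n p \<longleftrightarrow> (if a < b then key p b < key p a else key p a < key p b)"
    using ab anb by (auto simp: invs_def pr_def min_def max_def)
  have memq: "pr \<in> invs n q \<longleftrightarrow> (if a < b then key q b < key q a else key q a < key q b)"
    using ab anb by (auto simp: invs_def pr_def min_def max_def)
  from cases show ?thesis
  proof (elim disjE conjE)
    assume h: "?z a = 0" "?z b = 0" "b < a"
    have "pr \<in> invs n p" "pr \<notin> invs n q" using h memp memq ka by (auto simp: sg_def)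
    moreover have "t q a + t q b = t p a + t p b" using h by (simp add: t_def cq)
    ultimately show ?thesis using C csum_split[of p] csum_split[of q] rest
      by (simp add: lenf_def q_def[symmetric])
  next
    assume h: "?z a = 0" "?z b > 0"
    have "pr \<in> invs n p \<longleftrightarrow> pr \<in> invs n q" using h memp memq ka by (auto simp: sg_def)
    moreover have "t q a + t q b + 1 = t p a + t p b" using h ab fa by (simp add: t_def cq)
    ultimately show ?thesis using C csum_split[of p] csum_split[of q] rest
      by (simp add: lenf_def q_def[symmetric] split: if_splits)
  next
    assume h: "?z a > 0" "?z b > 0" "a < b"
    have "pr \<in> invs n p" "pr \<notin> invs n q" using h memp memq ka by (auto simp: sg_def)
    moreover have "t q a + t q b = t p a + t p b" using h ab fa by (simp add: t_def cq)
    ultimately show ?thesis using C csum_split[of p] csum_split[of q] rest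
      by (simp add: lenf_def q_def[symmetric])
  qed
qed

lemma swp_swp: "swp i (swp i x) = x" by (simp add: swp_def)

lemma swap_invol: assumes "p \<in> G r n" "1 \<le> r" "1 \<le> i" "i < n"
  shows "cmult r (geni i) (cmult r (geni i) p) = p" "cmult r (geni i) p \<in> G r n"
proof -
  show G2: "cmult r (geni i) p \<in> G r n" using assms gens_G[of r "geni i" n]
    by (intro cmult_G) (auto simp: gens_def)
  show "cmult r (geni i) (cmult r (geni i) p) = p"
    using mult_geni[OF G2] mult_geni[OF assms(1)] by (simp add: swp_swp o_def)
qed

lemma nD_D: assumes pG: "p \<in> G r n" and i: "1 \<le> i" "i < n" and nD: "\<not> Dsc n i p"
  shows "Dsc n i (cmult r (geni i) p)"
proof -
  have perm: "fst p permutes {1..n}" using G_D(1)[OF pG] .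
  obtain a where a: "a \<in> {1..n}" "fst p a = i" using perm_ex[OF perm, of i] i by auto
  obtain b where b: "b \<in> {1..n}" "fst p b = i+1" using perm_ex[OF perm, of "i+1"] i by auto
  have anb: "a \<noteq> b" using a b by auto
  have c: "\<not> ((snd p a = 0 \<and> snd p b = 0 \<and> b < a) \<or> (snd p a = 0 \<and> snd p b > 0) \<or> (snd p a > 0 \<and> snd p b > 0 \<and> a < b))"
    using nD a b unfolding Dsc_def by blast
  show ?thesis unfolding Dsc_def mult_geni[OF pG]
    apply (rule exI[of _ b], rule exI[of _ a])
    using a b anb c by (auto simp: swp_def)
qed

lemma swap_le: assumes pG: "p \<in> G r n" and r: "1 \<le> r" and i: "1 \<le> i" "i < n"
  shows "lenf n (cmult r (geni i) p) \<le> lenf n p + 1"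
proof (cases "Dsc n i p")
  case True then show ?thesis using swap_lenf[OF pG i] by simp
next
  case False
  have "lenf n (cmult r (geni i) p) = lenf n (cmult r (geni i) (cmult r (geni i) p)) + 1"
    using swap_lenf[OF swap_invol(2)[OF pG r i] i nD_D[OF pG i False]] .
  then show ?thesis using swap_invol(1)[OF pG r i] by simp
qed

lemma cmp_one: "v \<ge> 2 \<Longrightarrow> (sg d v < sg c (Suc 0) \<longleftrightarrow> sg d v < sg c' (Suc 0)) \<and> (sg c (Suc 0) < sg d v \<longleftrightarrow> sg c' (Suc 0) < sg d v)"
  by (simp add: sg_def)

lemma recol1:
  assumes pG: "p \<in> G r n" and p1: "p1 \<in> {1..n}" "fst p p1 = 1"
    and q: "fst q = fst p" "\<And>k. k \<noteq> p1 \<Longrightarrow> snd q k = snd p k"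
  shows "lenf n q + snd p p1 = lenf n p + snd q p1"
proof -
  have perm: "fst p permutes {1..n}" using G_D(1)[OF pG] .
  have v2: "fst p x \<ge> 2" if "x \<in> {1..n}" "x \<noteq> p1" for x
  proof -
    have "fst p x \<ge> 1" using perm_in[OF perm that(1)] by auto
    moreover have "fst p x \<noteq> 1" using p1 that perm_inj[OF perm] by metis
    ultimately show ?thesis by simp
  qed
  have cmp: "key q y < key q x \<longleftrightarrow> key p y < key p x" if "x \<in> {1..n}" "y \<in> {1..n}" for x y
  proof (cases "x = p1"; cases "y = p1")
    assume "x = p1" "y = p1" then show ?thesis by simp
  next
    assume h: "x = p1" "y \<noteq> p1"
    then show ?thesis using cmp_one[OF v2[OF that(2) h(2)]] p1 q by (simp add: key_sg)
  next
    assume h: "x \<noteq> p1" "y = p1"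
    then show ?thesis using cmp_one[OF v2[OF that(1) h(1)]] p1 q by (simp add: key_sg)
  next
    assume h: "x \<noteq> p1" "y \<noteq> p1"
    then show ?thesis using q by (simp add: key_sg)
  qed
  have inv: "invs n q = invs n p" unfolding invs_def using cmp by blast
  define t where "t = (\<lambda>(p::cperm) (x::nat). if snd p x = 0 then 0 else fst p x + snd p x - (1::nat))"
  have cs: "csum n p' = t p' p1 + sum (t p') ({1..n} - {p1})" for p'
  proof -
    have "csum n p' = sum (t p') {1..n}" unfolding csum_def t_def by simp
    then show ?thesis using sum.remove[of "{1..n}" p1 "t p'"] p1 by simp
  qed
  have rest: "sum (t q) ({1..n} - {p1}) = sum (t p) ({1..n} - {p1})"
    by (rule sum.cong) (auto simp: t_def q)
  have "t q p1 = snd q p1" "t p p1 = snd p p1" using p1 q by (auto simp: t_def)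
  then show ?thesis using cs[of p] cs[of q] rest inv by (simp add: lenf_def)
qed

lemma gen0_le: assumes pG: "p \<in> G r n" and r: "1 \<le> r" and n: "1 \<le> n"
  shows "lenf n (cmult r (gen0 r) p) \<le> lenf n p + 1"
proof -
  have perm: "fst p permutes {1..n}" using G_D(1)[OF pG] .
  obtain p1 where p1: "p1 \<in> {1..n}" "fst p p1 = 1" using perm_ex[OF perm, of 1] n by auto
  let ?q = "cmult r (gen0 r) p"
  have q: "fst ?q = fst p" "\<And>k. k \<noteq> p1 \<Longrightarrow> snd ?q k = snd p k" "snd ?q p1 = (snd p p1 + 1) mod r"
    using mult_gen0[OF pG] p1 perm_inj[OF perm] by auto
  have "snd ?q p1 \<le> snd p p1 + 1" using q(3) by (metis mod_less_eq_dividend)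
  then show ?thesis using recol1[OF pG p1 q(1,2)] by linarith
qed

lemma gen0_desc: assumes pG: "p \<in> G r n" and p1: "p1 \<in> {1..n}" "fst p p1 = 1" and z: "snd p p1 > 0"
  shows "\<exists>q \<in> G r n. cmult r (gen0 r) q = p \<and> lenf n p = lenf n q + 1"
proof -
  have perm: "fst p permutes {1..n}" using G_D(1)[OF pG] .
  define q where "q = (fst p, (snd p)(p1 := snd p p1 - 1))"
  have r: "snd p p1 < r" using G_D(2)[OF pG] .
  have qG: "q \<in> G r n"
  proof (rule G_I)
    show "fst q permutes {1..n}" using perm by (simp add: q_def)
    show "snd q i < r" for i using G_D(2)[OF pG, of i] r by (cases "i = p1") (simp_all add: q_def less_imp_diff_less)
    show "snd q i = 0" if "i \<notin> {1..n}" for i using G_D(3)[OF pG that] p1 that by (auto simp: q_def)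
  qed
  have m: "cmult r (gen0 r) q = p"
  proof -
    have "(if fst p k = 1 then (snd q k + 1) mod r else snd q k) = snd p k" for k
    proof (cases "k = p1")
      case True then show ?thesis using p1 z r by (simp add: q_def)
    next
      case False
      then have "fst p k \<noteq> 1" using p1 perm_inj[OF perm] by metis
      then show ?thesis using False by (simp add: q_def)
    qed
    then show ?thesis unfolding mult_gen0[OF qG] by (simp add: q_def fun_eq_iff)
  qed
  have e1: "fst p = fst q" by (simp add: q_def)
  have e2: "\<And>k. k \<noteq> p1 \<Longrightarrow> snd p k = snd q k" by (simp add: q_def)
  have p1q: "fst q p1 = 1" using p1 by (simp add: q_def)
  have "lenf n p + snd q p1 = lenf n q + snd p p1"
    using recol1[OF qG p1(1) p1q e1 e2] .
  then have "lenf n p = lenf n q + 1" using z by (simp add: q_def)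
  then show ?thesis using qG m by blast
qed

lemma pos_props: assumes "\<sigma> permutes {1..n}" "v \<in> {1..n}"
  shows "inv \<sigma> v \<in> {1..n}" "\<sigma> (inv \<sigma> v) = v"
  using assms permutes_inverses(1)[OF assms(1)] perm_in[OF permutes_inv[OF assms(1)]] by auto

lemma nodesc_cone:
  assumes pG: "p \<in> G r n" and nD: "\<And>i. 1 \<le> i \<Longrightarrow> i < n \<Longrightarrow> \<not> Dsc n i p"
    and c1: "1 \<le> n \<Longrightarrow> snd p (inv (fst p) 1) = 0"
  shows "p = cone"
proof -
  let ?s = "fst p" and ?z = "snd p"
  have perm: "?s permutes {1..n}" using G_D(1)[OF pG] .
  let ?pos = "inv ?s"
  have pp: "?pos v \<in> {1..n}" "?s (?pos v) = v" if "v \<in> {1..n}" for v using pos_props[OF perm that] by auto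
  have step: "?z (?pos v) = 0 \<Longrightarrow> ?z (?pos (v+1)) = 0 \<and> ?pos v < ?pos (v+1)" if "1 \<le> v" "v < n" for v
  proof -
    assume h: "?z (?pos v) = 0"
    have a: "?pos v \<in> {1..n}" "?s (?pos v) = v" using pp[of v] that by auto
    have b: "?pos (v+1) \<in> {1..n}" "?s (?pos (v+1)) = v+1" using pp[of "v+1"] that by auto
    have "?pos v \<noteq> ?pos (v+1)" using a(2) b(2) by (metis n_not_Suc_n Suc_eq_plus1)
    moreover have "\<not> Dsc n v p" using nD that by auto
    ultimately show ?thesis using a b h unfolding Dsc_def by fastforce
  qed
  have z0: "?z (?pos v) = 0" if "v \<in> {1..n}" for v
    using that
  proof (induction v)
    case 0 then show ?case by simp
  next
    case (Suc v)
    show ?case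
    proof (cases "v = 0")
      case True then show ?thesis using c1 Suc by simp
    next
      case False then show ?thesis using Suc step[of v] by auto
    qed
  qed
  have mono1: "?pos v < ?pos (v+1)" if "1 \<le> v" "v < n" for v using step[OF that] z0[of v] that by auto
  have mono: "?pos u < ?pos v" if "1 \<le> u" "u < v" "v \<le> n" for u v
    using that
  proof (induction v)
    case 0 then show ?case by simp
  next
    case (Suc v)
    show ?case
    proof (cases "u = v")
      case True then show ?thesis using mono1[of u] Suc by simp
    next
      case False then have "?pos u < ?pos v" using Suc by simp
      also have "\<dots> < ?pos (Suc v)" using mono1[of v] Suc False by simp
      finally show ?thesis .
    qed
  qed
  have ge: "?pos v \<ge> v" if "v \<in> {1..n}" for v
    using that
  proof (induction v)
    case 0 then show ?case by simp
  next
    case (Suc v)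
    show ?case
    proof (cases "v = 0")
      case True then show ?thesis using pp[of 1] Suc by auto
    next
      case False then show ?thesis using Suc mono1[of v] by auto
    qed
  qed
  have le: "?pos (n - k) \<le> n - k" if "k < n" for k
    using that
  proof (induction k)
    case 0 then show ?case using pp[of n] by auto
  next
    case (Suc k)
    have "?pos (n - Suc k) < ?pos (n - k)" using mono[of "n - Suc k" "n - k"] Suc by auto
    then show ?case using Suc by auto
  qed
  have pid: "?pos v = v" if "v \<in> {1..n}" for v
    using ge[OF that] le[of "n - v"] that by auto
  have sid: "?s a = a" for a
  proof (cases "a \<in> {1..n}")
    case True then show ?thesis using pp[OF True] pid[OF True] by simp
  next
    case False then show ?thesis using perm_out[OF perm] by simp
  qed
  have zid: "?z a = 0" for a
  proof (cases "a \<in> {1..n}")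
    case True then show ?thesis using z0[OF True] pid[OF True] by simp
  next
    case False then show ?thesis using G_D(3)[OF pG] by simp
  qed
  show ?thesis using sid zid by (cases p) (auto simp: cone_def fun_eq_iff)
qed

lemma word_upper: assumes r: "1 \<le> r" shows "p \<in> G r n \<Longrightarrow>
   \<exists>ws. length ws = lenf n p \<and> set ws \<subseteq> gens r n \<and> foldr (cmult r) ws cone = p"
proof (induction "lenf n p" arbitrary: p rule: less_induct)
  case less
  note pG = less.prems
  have perm: "fst p permutes {1..n}" using G_D(1)[OF pG] .
  show ?case
  proof (cases "1 \<le> n \<and> snd p (inv (fst p) 1) > 0")
    case True
    have p1: "inv (fst p) 1 \<in> {1..n}" "fst p (inv (fst p) 1) = 1" using pos_props[OF perm, of 1] True by auto
    obtain q where q: "q \<in> G r n" "cmult r (gen0 r) q = p" "lenf n p = lenf n q + 1"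
      using gen0_desc[OF pG p1] True by auto
    obtain ws where ws: "length ws = lenf n q" "set ws \<subseteq> gens r n" "foldr (cmult r) ws cone = q"
      using less.hyps[of q] q by auto
    show ?thesis
      by (rule exI[of _ "gen0 r # ws"]) (use ws q True in \<open>auto simp: gens_def\<close>)
  next
    case F1: False
    show ?thesis
    proof (cases "\<exists>i. 1 \<le> i \<and> i < n \<and> Dsc n i p")
      case True
      then obtain i where i: "1 \<le> i" "i < n" "Dsc n i p" by blast
      define q where "q = cmult r (geni i) p"
      have qG: "q \<in> G r n" and pq: "cmult r (geni i) q = p" using swap_invol[OF pG r i(1,2)] by (auto simp: q_def)
      have l: "lenf n p = lenf n q + 1" using swap_lenf[OF pG i] by (simp add: q_def)
      obtain ws where ws: "length ws = lenf n q" "set ws \<subseteq> gens r n" "foldr (cmult r) ws cone = q"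
        using less.hyps[of q] qG l by auto
      show ?thesis
        by (rule exI[of _ "geni i # ws"]) (use ws pq l i in \<open>auto simp: gens_def\<close>)
    next
      case False
      have "p = cone" using nodesc_cone[OF pG] False F1 by auto
      then show ?thesis by (intro exI[of _ "[]"]) (simp add: lenf_cone)
    qed
  qed
qed

lemma word_lower: assumes r: "1 \<le> r"
  shows "set ws \<subseteq> gens r n \<Longrightarrow> lenf n (foldr (cmult r) ws cone) \<le> length ws"
proof (induction ws)
  case Nil then show ?case by (simp add: lenf_cone)
next
  case (Cons g ws)
  have fG: "foldr (cmult r) ws cone \<in> G r n" using foldr_G[OF r] Cons by auto
  have g: "g = gen0 r \<and> 1 \<le> n \<or> (\<exists>i. g = geni i \<and> 1 \<le> i \<and> i < n)"
    using Cons.prems by (auto simp: gens_def split: if_splits)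
  have "lenf n (cmult r g (foldr (cmult r) ws cone)) \<le> lenf n (foldr (cmult r) ws cone) + 1"
    using g gen0_le[OF fG r] swap_le[OF fG r] by auto
  then show ?case using Cons by simp
qed

lemma clength_lenf: assumes r: "1 \<le> r" and pG: "p \<in> G r n" shows "clength r n p = lenf n p"
  unfolding clength_def
proof (rule Least_equality)
  show "\<exists>ws. length ws = lenf n p \<and> set ws \<subseteq> gens r n \<and> foldr (cmult r) ws cone = p"
    using word_upper[OF r pG] .
  show "lenf n p \<le> k" if "\<exists>ws. length ws = k \<and> set ws \<subseteq> gens r n \<and> foldr (cmult r) ws cone = p" for k
    using that word_lower[OF r] by blast
qed

definition hh :: "nat \<Rightarrow> nat \<Rightarrow> nat" where "hh c i = (if i < c then i else Suc i)"
definition gg :: "nat \<Rightarrow> nat \<Rightarrow> nat" where "gg c i = (if i < c then i else i - 1)"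

lemma hh_gg: "i \<noteq> c \<Longrightarrow> hh c (gg c i) = i" unfolding hh_def gg_def by auto
lemma gg_hh: "gg c (hh c i) = i" by (simp add: hh_def gg_def)
lemma hh_ne: "hh c i \<noteq> c" by (simp add: hh_def)
lemma hh_inj: "hh c i = hh c j \<Longrightarrow> i = j" by (metis gg_hh)

definition delL :: "nat \<Rightarrow> cperm \<Rightarrow> cperm" where
  "delL n p = (let c = inv (fst p) n in
     (\<lambda>i. if i < n then fst p (hh c i) else i, \<lambda>i. if i < n then snd p (hh c i) else 0))"

definition insL :: "nat \<Rightarrow> cperm \<Rightarrow> nat \<Rightarrow> nat \<Rightarrow> cperm" where
  "insL n p c t = (\<lambda>i. if i = c then n else if i \<le> n then fst p (gg c i) else i,
                   \<lambda>i. if i = c then t else if i \<le> n then snd p (gg c i) else 0)"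

lemma posn: assumes "p \<in> G r (Suc m)"
  shows "inv (fst p) (Suc m) \<in> {1..Suc m}" "fst p (inv (fst p) (Suc m)) = Suc m"
  using pos_props[OF G_D(1)[OF assms], of "Suc m"] by auto

lemma delL_G: assumes pG: "p \<in> G r (Suc m)" shows "delL (Suc m) p \<in> G r m"
proof -
  define c where "c = inv (fst p) (Suc m)"
  have perm: "fst p permutes {1..Suc m}" using G_D(1)[OF pG] .
  have c: "c \<in> {1..Suc m}" "fst p c = Suc m" using posn[OF pG] by (auto simp: c_def)
  have d: "delL (Suc m) p = (\<lambda>i. if i < Suc m then fst p (hh c i) else i, \<lambda>i. if i < Suc m then snd p (hh c i) else 0)"
    unfolding delL_def Let_def c_def by simp
  have hin: "hh c i \<in> {1..Suc m}" if "i \<in> {1..m}" for i using that c by (auto simp: hh_def)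
  have h0: "hh c 0 = 0" using c by (simp add: hh_def)
  show ?thesis unfolding d
  proof (rule G_I)
    show "fst (\<lambda>i. if i < Suc m then fst p (hh c i) else i, \<lambda>i. if i < Suc m then snd p (hh c i) else 0) permutes {1..m}"
      unfolding fst_conv
    proof (rule inj_imp_permutes)
      show "inj_on (\<lambda>i. if i < Suc m then fst p (hh c i) else i) {1..m}"
        by (rule inj_onI) (auto dest!: perm_inj[OF perm] hh_inj)
      show "(if i < Suc m then fst p (hh c i) else i) \<in> {1..m}" if "i \<in> {1..m}" for i
      proof -
        have "fst p (hh c i) \<in> {1..Suc m}" using perm_in[OF perm hin[OF that]] .
        moreover have "fst p (hh c i) \<noteq> Suc m" using c hh_ne perm_inj[OF perm] by metis
        ultimately show ?thesis using that by auto
      qed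
      show "(if i < Suc m then fst p (hh c i) else i) = i" if "i \<notin> {1..m}" for i
        using that h0 perm_out[OF perm, of 0] by (cases "i = 0") auto
    qed simp
    show "snd (\<lambda>i. if i < Suc m then fst p (hh c i) else i, \<lambda>i. if i < Suc m then snd p (hh c i) else 0) i < r" for i
      using G_D(2)[OF pG] G_D(2)[OF pG, of 0] by (cases "r = 0") auto
    show "snd (\<lambda>i. if i < Suc m then fst p (hh c i) else i, \<lambda>i. if i < Suc m then snd p (hh c i) else 0) i = 0"
      if "i \<notin> {1..m}" for i using that h0 G_D(3)[OF pG, of 0] by (cases "i = 0") auto
  qed
qed

lemma insL_G: assumes pG: "p \<in> G r m" and c: "c \<in> {1..Suc m}" and t: "t < r"
  shows "insL (Suc m) p c t \<in> G r (Suc m)"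
proof -
  have perm: "fst p permutes {1..m}" using G_D(1)[OF pG] .
  have gin: "gg c i \<in> {1..m}" if "i \<in> {1..Suc m}" "i \<noteq> c" for i using that c by (auto simp: gg_def)
  show ?thesis unfolding insL_def
  proof (rule G_I, unfold fst_conv snd_conv)
    show "(\<lambda>i. if i = c then Suc m else if i \<le> Suc m then fst p (gg c i) else i) permutes {1..Suc m}"
    proof (rule inj_imp_permutes)
      show "inj_on (\<lambda>i. if i = c then Suc m else if i \<le> Suc m then fst p (gg c i) else i) {1..Suc m}"
      proof (rule inj_onI)
        fix x y assume x: "x \<in> {1..Suc m}" and y: "y \<in> {1..Suc m}"
          and e: "(if x = c then Suc m else if x \<le> Suc m then fst p (gg c x) else x) = (if y = c then Suc m else if y \<le> Suc m then fst p (gg c y) else y)"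
        have "fst p (gg c i) \<in> {1..m}" if "i \<in> {1..Suc m}" "i \<noteq> c" for i using perm_in[OF perm gin[OF that]] .
        note fin = this
        show "x = y"
        proof (cases "x = c"; cases "y = c")
          assume "x \<noteq> c" "y \<noteq> c"
          then have "fst p (gg c x) = fst p (gg c y)" using e x y by simp
          then have "gg c x = gg c y" by (rule perm_inj[OF perm])
          then show "x = y" using hh_gg \<open>x \<noteq> c\<close> \<open>y \<noteq> c\<close> by metis
        qed (use e x y fin in \<open>fastforce+\<close>)
      qed
      show "(if i = c then Suc m else if i \<le> Suc m then fst p (gg c i) else i) \<in> {1..Suc m}" if "i \<in> {1..Suc m}" for i
        using that perm_in[OF perm gin[OF that]] by auto
      show "(if i = c then Suc m else if i \<le> Suc m then fst p (gg c i) else i) = i" if "i \<notin> {1..Suc m}" for i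
        using that c perm_out[OF perm, of 0] by (cases "i = 0") (auto simp: gg_def)
    qed simp
    show "(if i = c then t else if i \<le> Suc m then snd p (gg c i) else 0) < r" for i
      using G_D(2)[OF pG] t by auto
    show "(if i = c then t else if i \<le> Suc m then snd p (gg c i) else 0) = 0" if "i \<notin> {1..Suc m}" for i
      using that c G_D(3)[OF pG, of 0] by (cases "i = 0") (auto simp: gg_def)
  qed
qed

lemma insL_pos: assumes pG: "p \<in> G r m" and c: "c \<in> {1..Suc m}" and t: "t < r"
  shows "inv (fst (insL (Suc m) p c t)) (Suc m) = c"
proof -
  have "fst (insL (Suc m) p c t) permutes {1..Suc m}" using G_D(1)[OF insL_G[OF assms]] .
  moreover have "fst (insL (Suc m) p c t) c = Suc m" by (simp add: insL_def)
  ultimately show ?thesis by (metis permutes_inverses(2))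
qed

lemma delL_insL: assumes pG: "p \<in> G r m" and c: "c \<in> {1..Suc m}" and t: "t < r"
  shows "delL (Suc m) (insL (Suc m) p c t) = p"
proof -
  have perm: "fst p permutes {1..m}" using G_D(1)[OF pG] .
  have 1: "fst p i = i" if "\<not> i < Suc m" for i using that perm_out[OF perm] by auto
  have 2: "snd p i = 0" if "\<not> i < Suc m" for i using that G_D(3)[OF pG] by auto
  have 3: "hh c i \<le> Suc m" if "i < Suc m" for i using that c by (auto simp: hh_def)
  let ?q = "insL (Suc m) p c t"
  have f: "(if i < Suc m then fst ?q (hh c i) else i) = fst p i" for i
    using 1 3 hh_ne[of c i] gg_hh[of c i] by (simp add: insL_def)
  have s: "(if i < Suc m then snd ?q (hh c i) else 0) = snd p i" for i
    using 2 3 hh_ne[of c i] gg_hh[of c i] by (simp add: insL_def)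
  show ?thesis unfolding delL_def insL_pos[OF assms] Let_def
    using f s by (cases p) (simp add: fun_eq_iff)
qed

lemma insL_delL: assumes pG: "p \<in> G r (Suc m)"
  shows "insL (Suc m) (delL (Suc m) p) (inv (fst p) (Suc m)) (snd p (inv (fst p) (Suc m))) = p"
proof -
  define c where "c = inv (fst p) (Suc m)"
  have perm: "fst p permutes {1..Suc m}" using G_D(1)[OF pG] .
  have c: "c \<in> {1..Suc m}" "fst p c = Suc m" using posn[OF pG] by (auto simp: c_def)
  have 1: "fst p i = i" if "\<not> i \<le> Suc m" for i using that perm_out[OF perm] by auto
  have 2: "snd p i = 0" if "\<not> i \<le> Suc m" for i using that G_D(3)[OF pG] by auto
  have 3: "gg c i < Suc m" if "i \<le> Suc m" "i \<noteq> c" for i using that c by (auto simp: gg_def)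
  let ?d = "delL (Suc m) p"
  have d: "?d = (\<lambda>i. if i < Suc m then fst p (hh c i) else i, \<lambda>i. if i < Suc m then snd p (hh c i) else 0)"
    unfolding delL_def Let_def c_def by simp
  have f: "(if i = c then Suc m else if i \<le> Suc m then fst ?d (gg c i) else i) = fst p i" for i
    using 1 3 hh_gg[of i c] c by (simp add: d)
  have s: "(if i = c then snd p c else if i \<le> Suc m then snd ?d (gg c i) else 0) = snd p i" for i
    using 2 3 hh_gg[of i c] c by (simp add: d)
  show ?thesis unfolding c_def[symmetric] insL_def
    using f s by (cases p) (simp add: fun_eq_iff)
qed

lemma hh_less_iff: "hh c a < hh c b \<longleftrightarrow> a < b" by (auto simp: hh_def)
lemma hh_le_iff: "hh c a \<le> hh c b \<longleftrightarrow> a \<le> b" by (auto simp: hh_def)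
lemma hh_range: "c \<in> {1..Suc m} \<Longrightarrow> a \<in> {1..m} \<Longrightarrow> hh c a \<in> {1..Suc m} \<and> hh c a \<noteq> c"
  by (auto simp: hh_def)
lemma gg_range: "c \<in> {1..Suc m} \<Longrightarrow> j \<in> {1..Suc m} \<Longrightarrow> j \<noteq> c \<Longrightarrow> gg c j \<in> {1..m} \<and> hh c (gg c j) = j"
  using hh_gg by (auto simp: gg_def)

definition LRM :: "nat \<Rightarrow> cperm \<Rightarrow> (nat \<times> nat \<times> nat) set" where
  "LRM n p = {(i, fst p i, snd p i) | i. i \<in> {1..n} \<and> (\<forall>j\<in>{1..<i}. fst p j < fst p i)}"

lemma img_compr: "g ` {f i | i. P i} = {g (f i) | i. P i}" by blast

lemma Lmal_LRM: "Lmal n p = (\<lambda>(i,v,t). (v,t)) ` LRM n p"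
  unfolding Lmal_def LRM_def img_compr by simp
lemma Lmap_LRM: "Lmap n p = (\<lambda>(i,v,t). (i,t)) ` LRM n p"
  unfolding Lmap_def LRM_def img_compr by simp

locale delLctx =
  fixes r m p c
  assumes pG: "p \<in> G r (Suc m)" and c_def: "c = inv (fst p) (Suc m)"
begin

definition p' where "p' = delL (Suc m) p"

lemma perm: "fst p permutes {1..Suc m}" using G_D(1)[OF pG] .
lemma c: "c \<in> {1..Suc m}" "fst p c = Suc m" using posn[OF pG] c_def by auto
lemma p'G: "p' \<in> G r m" unfolding p'_def by (rule delL_G[OF pG])
lemma p'f: "a \<le> m \<Longrightarrow> fst p' a = fst p (hh c a)" "a \<le> m \<Longrightarrow> snd p' a = snd p (hh c a)"
  by (simp_all add: p'_def delL_def c_def Let_def)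
lemma sne: "j \<noteq> c \<Longrightarrow> fst p j \<noteq> Suc m" using c perm_inj[OF perm] by metis
lemma sle: "j \<in> {1..Suc m} \<Longrightarrow> fst p j \<in> {1..Suc m}" using perm_in[OF perm] .
lemma slt: "j \<in> {1..Suc m} \<Longrightarrow> j \<noteq> c \<Longrightarrow> fst p j < Suc m" using sle sne by fastforce

lemma Rmil_rec: "Rmil (Suc m) p = Rmil m p' \<union> (if c = Suc m then {(Suc m, snd p c)} else {})"
proof (rule set_eqI, rule iffI)
  fix x assume "x \<in> Rmil (Suc m) p"
  then obtain i where i: "i \<in> {1..Suc m}" "\<forall>j\<in>{i<..Suc m}. fst p i < fst p j" "x = (fst p i, snd p i)"
    unfolding Rmil_def by auto
  show "x \<in> Rmil m p' \<union> (if c = Suc m then {(Suc m, snd p c)} else {})"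
  proof (cases "i = c")
    case True
    have "c = Suc m"
    proof (rule ccontr)
      assume "c \<noteq> Suc m" then have "Suc m \<in> {i<..Suc m}" using c True by auto
      then show False using i(2) True c slt[of "Suc m"] by fastforce
    qed
    then show ?thesis using True i c by simp
  next
    case False
    obtain a where a: "a \<in> {1..m}" "hh c a = i" using gg_range[OF c(1) i(1) False] by blast
    have "\<forall>j\<in>{a<..m}. fst p' a < fst p' j"
    proof
      fix j assume j: "j \<in> {a<..m}"
      then have "hh c j \<in> {i<..Suc m}" using a hh_less_iff[of c a j] hh_range[OF c(1), of j] by auto
      then show "fst p' a < fst p' j" using i(2) a j p'f by auto
    qed
    then have "x \<in> Rmil m p'" unfolding Rmil_def using a i p'f by (auto intro!: exI[of _ a])
    then show ?thesis by simp
  qed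
next
  fix x assume "x \<in> Rmil m p' \<union> (if c = Suc m then {(Suc m, snd p c)} else {})"
  then show "x \<in> Rmil (Suc m) p"
  proof
    assume "x \<in> Rmil m p'"
    then obtain a where a: "a \<in> {1..m}" "\<forall>j\<in>{a<..m}. fst p' a < fst p' j" "x = (fst p' a, snd p' a)"
      unfolding Rmil_def by auto
    let ?i = "hh c a"
    have i: "?i \<in> {1..Suc m}" "?i \<noteq> c" using hh_range[OF c(1) a(1)] by auto
    have "\<forall>j\<in>{?i<..Suc m}. fst p ?i < fst p j"
    proof
      fix j assume j: "j \<in> {?i<..Suc m}"
      show "fst p ?i < fst p j"
      proof (cases "j = c")
        case True then show ?thesis using c slt[OF i] by simp
      next
        case False
        obtain b where b: "b \<in> {1..m}" "hh c b = j" using gg_range[OF c(1) _ False] j i by auto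
        have "b \<in> {a<..m}" using b j hh_less_iff[of c a b] by auto
        then show ?thesis using a(2) b p'f a by auto
      qed
    qed
    then show ?thesis unfolding Rmil_def using i a p'f by auto
  next
    assume h: "x \<in> (if c = Suc m then {(Suc m, snd p c)} else {})"
    then have "c = Suc m" "x = (fst p c, snd p c)" using c by (auto split: if_splits)
    then show ?thesis unfolding Rmil_def using c by (auto intro!: exI[of _ "Suc m"])
  qed
qed

lemma Lmil_rec: "Lmil (Suc m) p = Lmil m p' \<union> (if c = 1 then {(Suc m, snd p c)} else {})"
proof (rule set_eqI, rule iffI)
  fix x assume "x \<in> Lmil (Suc m) p"
  then obtain i where i: "i \<in> {1..Suc m}" "\<forall>j\<in>{1..<i}. fst p i < fst p j" "x = (fst p i, snd p i)"
    unfolding Lmil_def by auto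
  show "x \<in> Lmil m p' \<union> (if c = 1 then {(Suc m, snd p c)} else {})"
  proof (cases "i = c")
    case True
    have "c = 1"
    proof (rule ccontr)
      assume "c \<noteq> 1" then have "1 \<in> {1..<i}" "1 \<noteq> c" using c True by auto
      then show False using i(2) True c slt[of 1] by fastforce
    qed
    then show ?thesis using True i c by simp
  next
    case False
    obtain a where a: "a \<in> {1..m}" "hh c a = i" using gg_range[OF c(1) i(1) False] by blast
    have "\<forall>j\<in>{1..<a}. fst p' a < fst p' j"
    proof
      fix j assume j: "j \<in> {1..<a}"
      then have "hh c j \<in> {1..<i}" using a hh_less_iff[of c j a] hh_range[OF c(1), of j] by auto
      then show "fst p' a < fst p' j" using i(2) a j p'f by auto
    qed
    then have "x \<in> Lmil m p'" unfolding Lmil_def using a i p'f by (auto intro!: exI[of _ a])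
    then show ?thesis by simp
  qed
next
  fix x assume "x \<in> Lmil m p' \<union> (if c = 1 then {(Suc m, snd p c)} else {})"
  then show "x \<in> Lmil (Suc m) p"
  proof
    assume "x \<in> Lmil m p'"
    then obtain a where a: "a \<in> {1..m}" "\<forall>j\<in>{1..<a}. fst p' a < fst p' j" "x = (fst p' a, snd p' a)"
      unfolding Lmil_def by auto
    let ?i = "hh c a"
    have i: "?i \<in> {1..Suc m}" "?i \<noteq> c" using hh_range[OF c(1) a(1)] by auto
    have "\<forall>j\<in>{1..<?i}. fst p ?i < fst p j"
    proof
      fix j assume j: "j \<in> {1..<?i}"
      show "fst p ?i < fst p j"
      proof (cases "j = c")
        case True then show ?thesis using c slt[OF i] by simp
      next
        case False
        obtain b where b: "b \<in> {1..m}" "hh c b = j" using gg_range[OF c(1) _ False] j i by auto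
        have "b \<in> {1..<a}" using b j hh_less_iff[of c b a] by auto
        then show ?thesis using a(2) b p'f a by auto
      qed
    qed
    then show ?thesis unfolding Lmil_def using i a p'f by (auto intro!: exI[of _ ?i])
  next
    assume h: "x \<in> (if c = 1 then {(Suc m, snd p c)} else {})"
    then have "c = 1" "x = (fst p c, snd p c)" using c by (auto split: if_splits)
    then show ?thesis unfolding Lmil_def using c by (auto intro!: exI[of _ 1])
  qed
qed

lemma LRM_rec: "LRM (Suc m) p = {x \<in> LRM m p'. fst x < c} \<union> {(c, Suc m, snd p c)}"
proof (rule set_eqI, rule iffI)
  fix x assume "x \<in> LRM (Suc m) p"
  then obtain i where i: "i \<in> {1..Suc m}" "\<forall>j\<in>{1..<i}. fst p j < fst p i" "x = (i, fst p i, snd p i)"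
    unfolding LRM_def by auto
  show "x \<in> {x \<in> LRM m p'. fst x < c} \<union> {(c, Suc m, snd p c)}"
  proof (cases "i = c")
    case True then show ?thesis using i c by simp
  next
    case False
    have ic: "i < c"
    proof (rule ccontr)
      assume "\<not> i < c" then have "c \<in> {1..<i}" using c False by auto
      then show False using i(2) c slt[OF i(1) False] by fastforce
    qed
    then have hi: "hh c i = i" "i \<in> {1..m}" using i c by (auto simp: hh_def)
    have "\<forall>j\<in>{1..<i}. fst p' j < fst p' i"
    proof
      fix j assume j: "j \<in> {1..<i}"
      then have "hh c j = j" using ic by (simp add: hh_def)
      then show "fst p' j < fst p' i" using i(2) j hi p'f by auto
    qed
    then have "x \<in> LRM m p'" unfolding LRM_def using hi i p'f by (auto intro!: exI[of _ i])
    then show ?thesis using i ic by simp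
  qed
next
  fix x assume "x \<in> {x \<in> LRM m p'. fst x < c} \<union> {(c, Suc m, snd p c)}"
  then show "x \<in> LRM (Suc m) p"
  proof
    assume "x \<in> {x \<in> LRM m p'. fst x < c}"
    then obtain a where a: "a \<in> {1..m}" "\<forall>j\<in>{1..<a}. fst p' j < fst p' a" "x = (a, fst p' a, snd p' a)" "a < c"
      unfolding LRM_def by auto
    have ha: "hh c a = a" using a by (simp add: hh_def)
    have "\<forall>j\<in>{1..<a}. fst p j < fst p a"
    proof
      fix j assume j: "j \<in> {1..<a}"
      then have "hh c j = j" using a by (simp add: hh_def)
      moreover have "fst p' j < fst p' a" using a(2) j by blast
      ultimately show "fst p j < fst p a" using j p'f(1)[of j] p'f(1)[of a] ha a(1) by simp
    qed
    then show ?thesis unfolding LRM_def using a ha p'f by (auto intro!: exI[of _ a])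
  next
    assume h: "x \<in> {(c, Suc m, snd p c)}"
    have "\<forall>j\<in>{1..<c}. fst p j < fst p c" using c slt by auto
    then show ?thesis unfolding LRM_def using h c by (auto intro!: exI[of _ c])
  qed
qed

lemma keyp': "a \<le> m \<Longrightarrow> key p' a = key p (hh c a)" by (simp add: key_def p'f)

lemma key_other: assumes "j \<in> {1..Suc m}" "j \<noteq> c"
  shows "key p j < int (Suc m)" "- int (Suc m) < key p j"
  using slt[OF assms] sle[OF assms(1)] by (auto simp: key_def)

lemma hh_img: "{1..Suc m} - {c} = hh c ` {1..m}"
proof
  show "{1..Suc m} - {c} \<subseteq> hh c ` {1..m}" using gg_range[OF c(1)] by (metis DiffE image_eqI insertI1 subsetI)
  show "hh c ` {1..m} \<subseteq> {1..Suc m} - {c}" using hh_range[OF c(1)] by auto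
qed

lemma lenf_rec: "lenf (Suc m) p = lenf m p' +
   (if snd p c = 0 then Suc m - c else (c - 1) + (Suc m + snd p c - 1))"
proof -
  let ?H = "map_prod (hh c) (hh c)"
  define C where "C = (if snd p c = 0 then Pair c ` {c<..Suc m} else (\<lambda>a. (a, c)) ` {1..<c})"
  have kc: "key p c = (if snd p c = 0 then int (Suc m) else - int (Suc m))" using c by (simp add: key_def)
  have inv_eq: "invs (Suc m) p = ?H ` invs m p' \<union> C"
  proof (rule set_eqI)
    fix x :: "nat \<times> nat"
    obtain u v where x: "x = (u, v)" by (cases x)
    show "x \<in> invs (Suc m) p \<longleftrightarrow> x \<in> ?H ` invs m p' \<union> C"
    proof (cases "u = c \<or> v = c")
      case True
      have "x \<notin> ?H ` invs m p'" using True hh_ne x by auto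
      moreover have "x \<in> invs (Suc m) p \<longleftrightarrow> x \<in> C"
      proof (cases "u = c")
        case True
        then show ?thesis using x c key_other[of v] kc by (auto simp: invs_def C_def)
      next
        case False
        then have "v = c" using \<open>u = c \<or> v = c\<close> by simp
        then show ?thesis using x c key_other[of u] kc False by (auto simp: invs_def C_def)
      qed
      ultimately show ?thesis by simp
    next
      case False
      have "x \<notin> C" using False x by (auto simp: C_def)
      moreover have "x \<in> invs (Suc m) p \<longleftrightarrow> x \<in> ?H ` invs m p'"
      proof
        assume xi: "x \<in> invs (Suc m) p"
        then have uv: "u \<in> {1..Suc m}" "v \<in> {1..Suc m}" "u < v" "key p v < key p u" using x by (auto simp: invs_def)
        obtain a where a: "a \<in> {1..m}" "hh c a = u" using gg_range[OF c(1) uv(1)] False by blast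
        obtain b where b: "b \<in> {1..m}" "hh c b = v" using gg_range[OF c(1) uv(2)] False by blast
        have "(a, b) \<in> invs m p'" using a b uv keyp' hh_less_iff[of c a b] by (auto simp: invs_def)
        then show "x \<in> ?H ` invs m p'" using a b x by force
      next
        assume "x \<in> ?H ` invs m p'"
        then obtain a b where ab: "(a,b) \<in> invs m p'" "x = (hh c a, hh c b)" by auto
        then have "a \<in> {1..m}" "b \<in> {1..m}" "a < b" "key p' b < key p' a" by (auto simp: invs_def)
        then show "x \<in> invs (Suc m) p" using ab hh_range[OF c(1)] keyp' hh_less_iff[of c a b]
          by (auto simp: invs_def)
      qed
      ultimately show ?thesis by simp
    qed
  qed
  have injH: "inj_on ?H (invs m p')" by (rule inj_onI) (auto dest: hh_inj)
  have disj: "?H ` invs m p' \<inter> C = {}" using hh_ne by (auto simp: C_def)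
  have finC: "finite C" by (simp add: C_def)
  have cardC: "card C = (if snd p c = 0 then Suc m - c else c - 1)"
    by (simp add: C_def card_image inj_on_def)
  have ci: "card (invs (Suc m) p) = card (invs m p') + card C"
    unfolding inv_eq using disj finC finite_invs card_image[OF injH]
    by (simp add: card_Un_disjoint)
  define t where "t = (\<lambda>j. if snd p j = 0 then 0 else fst p j + snd p j - (1::nat))"
  have cs1: "csum (Suc m) p = t c + sum t ({1..Suc m} - {c})"
    unfolding csum_def t_def[symmetric] using c sum.remove[of "{1..Suc m}" c t] by (simp add: t_def)
  have cs2: "sum t ({1..Suc m} - {c}) = csum m p'"
  proof -
    have "sum t ({1..Suc m} - {c}) = sum (t \<circ> hh c) {1..m}"
      unfolding hh_img by (rule sum.reindex) (auto simp: inj_on_def dest: hh_inj)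
    also have "\<dots> = csum m p'" unfolding csum_def by (rule sum.cong) (auto simp: t_def p'f)
    finally show ?thesis .
  qed
  have tc: "t c = (if snd p c = 0 then 0 else Suc m + snd p c - 1)" using c by (simp add: t_def)
  show ?thesis unfolding lenf_def using ci cs1 cs2 tc cardC by auto
qed

end

definition delS :: "nat \<Rightarrow> nat \<Rightarrow> cperm \<Rightarrow> cperm" where
 "delS r n p = (let c = inv (fst p) n; e = (r - snd p c mod r) mod r in
    ((fst p)(c := fst p n, n := n), (snd p)(c := (snd p n + r - e) mod r, n := 0)))"

definition insS :: "nat \<Rightarrow> nat \<Rightarrow> cperm \<Rightarrow> nat \<Rightarrow> nat \<Rightarrow> cperm" where
 "insS r n p c e = (if c = n then (fst p, (snd p)(n := (r - e) mod r))
    else ((fst p)(c := n, n := fst p c), (snd p)(c := (r - e) mod r, n := (snd p c + e) mod r)))"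

definition eS :: "nat \<Rightarrow> nat \<Rightarrow> nat" where "eS r z = (r - z mod r) mod r"

lemma bij_step:
  assumes B: "bij_betw f {1..Suc j} {1..Suc j}" and c: "c \<in> {1..Suc j}" "f c = Suc j"
  shows "bij_betw (if c < Suc j then f(c := f (Suc j)) else f) {1..j} {1..j}"
proof -
  let ?g = "if c < Suc j then f(c := f (Suc j)) else f"
  have inj: "inj_on f {1..Suc j}" using B by (simp add: bij_betw_def)
  have fin: "f x \<in> {1..Suc j}" if "x \<in> {1..Suc j}" for x using B that by (auto simp: bij_betw_def)
  have fne: "f x \<noteq> Suc j" if "x \<in> {1..Suc j}" "x \<noteq> c" for x using inj that c by (metis inj_on_eq_iff)
  have g1: "?g x \<in> {1..j}" if "x \<in> {1..j}" for x
  proof (cases "x = c")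
    case True then have "c < Suc j" using that by auto
    moreover have "f (Suc j) \<in> {1..Suc j}" "f (Suc j) \<noteq> Suc j" using fin[of "Suc j"] fne[of "Suc j"] \<open>c < Suc j\<close> by auto
    ultimately show ?thesis using True by auto
  next
    case False then show ?thesis using that fin[of x] fne[of x] by auto
  qed
  have g2: "inj_on ?g {1..j}"
  proof (rule inj_onI)
    fix x y assume x: "x \<in> {1..j}" and y: "y \<in> {1..j}" and e: "?g x = ?g y"
    show "x = y"
    proof (cases "c < Suc j")
      case False then show ?thesis using e x y inj by (auto simp: inj_on_def)
    next
      case True
      have "f a = f b \<Longrightarrow> a \<in> {1..Suc j} \<Longrightarrow> b \<in> {1..Suc j} \<Longrightarrow> a = b" for a b using inj by (simp add: inj_on_def)
      note I = this
      have ne: "f (Suc j) \<noteq> f z" if "z \<in> {1..j}" for z using I[of "Suc j" z] that by auto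
      show ?thesis
      proof (cases "x = c"; cases "y = c")
        assume "x \<noteq> c" "y \<noteq> c" then show ?thesis using e I[of x y] x y True by auto
      next
        assume "x = c" "y \<noteq> c" then show ?thesis using e ne[OF y] True by auto
      next
        assume "x \<noteq> c" "y = c" then show ?thesis using e ne[OF x] True by auto
      qed simp
    qed
  qed
  have "?g ` {1..j} \<subseteq> {1..j}" using g1 by blast
  then have "?g ` {1..j} = {1..j}" using endo_inj_surj[OF _ _ g2] by blast
  then show ?thesis using g2 by (simp add: bij_betw_def)
qed

lemma sor_aux_cong: "bij_betw \<tau>2 {1..j} {1..j} \<Longrightarrow> (\<And>i. i \<in> {1..j} \<Longrightarrow> \<tau> i = \<tau>2 i \<and> y i = y2 i) \<Longrightarrow> sor_aux r j \<tau> y = sor_aux r j \<tau>2 y2"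
proof (induction j arbitrary: \<tau> y \<tau>2 y2)
  case 0 then show ?case by simp
next
  case (Suc j)
  have P: "(\<lambda>c. c \<in> {1..Suc j} \<and> \<tau> c = Suc j) = (\<lambda>c. c \<in> {1..Suc j} \<and> \<tau>2 c = Suc j)"
    using Suc.prems by auto
  have ex: "\<exists>!c. c \<in> {1..Suc j} \<and> \<tau>2 c = Suc j"
  proof -
    have "Suc j \<in> \<tau>2 ` {1..Suc j}" using Suc.prems(1) by (auto simp: bij_betw_def)
    then obtain c where "c \<in> {1..Suc j}" "\<tau>2 c = Suc j" by auto
    moreover have "inj_on \<tau>2 {1..Suc j}" using Suc.prems(1) by (simp add: bij_betw_def)
    ultimately show ?thesis by (auto simp: inj_on_def)
  qed
  define c where "c = (THE c. c \<in> {1..Suc j} \<and> \<tau> c = Suc j)"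
  have c2: "c = (THE c. c \<in> {1..Suc j} \<and> \<tau>2 c = Suc j)" unfolding c_def P ..
  have cp: "c \<in> {1..Suc j}" "\<tau>2 c = Suc j" using theI'[OF ex] c2 by auto
  have j: "\<tau> (Suc j) = \<tau>2 (Suc j)" "y (Suc j) = y2 (Suc j)" using Suc.prems(2)[of "Suc j"] by auto
  have yc: "y c = y2 c" using Suc.prems(2) cp by auto
  let ?e = "(r - y c mod r) mod r"
  have IH: "sor_aux r j (if c < Suc j then \<tau>(c := \<tau> (Suc j)) else \<tau>) (if c < Suc j then y(c := (y (Suc j) + r - ?e) mod r) else y)
      = sor_aux r j (if c < Suc j then \<tau>2(c := \<tau>2 (Suc j)) else \<tau>2) (if c < Suc j then y2(c := (y2 (Suc j) + r - ?e) mod r) else y2)"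
    by (rule Suc.IH[OF bij_step[OF Suc.prems(1) cp]]) (use Suc.prems(2) j in auto)
  show ?case using IH yc unfolding sor_aux.simps Let_def c_def[symmetric] c2[symmetric] by simp
qed


lemma transpose_fun: "f \<circ> Transposition.transpose c n = f(c := f n, n := f c)"
  by (auto simp: fun_eq_iff Transposition.transpose_def)

locale delSctx =
  fixes r m p c e
  assumes pG: "p \<in> G r (Suc m)" and r1: "1 \<le> r" and c_def: "c = inv (fst p) (Suc m)"
    and e_def: "e = eS r (snd p c)"
begin

definition p' where "p' = delS r (Suc m) p"

lemma perm: "fst p permutes {1..Suc m}" using G_D(1)[OF pG] .
lemma c: "c \<in> {1..Suc m}" "fst p c = Suc m" using posn[OF pG] c_def by auto
lemma p'fst: "fst p' = (fst p)(c := fst p (Suc m), Suc m := Suc m)"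
  by (simp add: p'_def delS_def c_def Let_def)
lemma p'snd: "snd p' = (snd p)(c := (snd p (Suc m) + r - e) mod r, Suc m := 0)"
  by (simp add: p'_def delS_def c_def e_def eS_def Let_def)
lemma p'fst2: "fst p' = fst p \<circ> Transposition.transpose c (Suc m)"
  unfolding p'fst transpose_fun using c by (auto simp: fun_eq_iff)

lemma p'G: "p' \<in> G r m"
proof (rule G_I)
  have "fst p' permutes {1..Suc m}" unfolding p'fst2
    using c by (intro permutes_compose[OF _ perm] permutes_swap_id) auto
  then show "fst p' permutes {1..m}"
    by (rule permutes_superset) (auto simp: p'fst)
  show "snd p' i < r" for i using G_D(2)[OF pG, of i] r1 by (simp add: p'snd)
  show "snd p' i = 0" if "i \<notin> {1..m}" for i
  proof (cases "i = Suc m")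
    case True then show ?thesis by (simp add: p'snd)
  next
    case False then have "i \<notin> {1..Suc m}" "i \<noteq> c" using that c by auto
    then show ?thesis using G_D(3)[OF pG] by (simp add: p'snd)
  qed
qed

lemma the_c: "(THE c. c \<in> {1..Suc m} \<and> fst p c = Suc m) = c"
  by (rule the_equality) (use c perm_inj[OF perm] in auto)

lemma sor_rec: "sor r (Suc m) p = (Suc m - c + (if e > 0 then 2 * (c - 1) + e else 0)) + sor r m p'"
proof -
  let ?\<tau> = "if c < Suc m then (fst p)(c := fst p (Suc m)) else fst p"
  let ?y = "if c < Suc m then (snd p)(c := (snd p (Suc m) + r - e) mod r) else snd p"
  have "sor r (Suc m) p = (Suc m - c + (if e > 0 then 2 * (c - 1) + e else 0)) + sor_aux r m ?\<tau> ?y"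
    unfolding sor_def sor_aux.simps Let_def the_c e_def eS_def by simp
  moreover have "sor_aux r m ?\<tau> ?y = sor r m p'"
    unfolding sor_def
  proof (rule sor_aux_cong)
    show "bij_betw (fst p') {1..m} {1..m}" using G_D(1)[OF p'G] by (rule permutes_imp_bij)
    show "?\<tau> i = fst p' i \<and> ?y i = snd p' i" if "i \<in> {1..m}" for i
      using that by (auto simp: p'fst p'snd)
  qed
  ultimately show ?thesis by simp
qed

end

lemma insS_fst: "fst p (Suc m) = Suc m \<Longrightarrow> fst (insS r (Suc m) p c e) = fst p \<circ> Transposition.transpose c (Suc m)"
  unfolding transpose_fun by (auto simp: insS_def fun_eq_iff)

lemma insS_G: assumes pG: "p \<in> G r m" and c: "c \<in> {1..Suc m}" and e: "e < r"
  shows "insS r (Suc m) p c e \<in> G r (Suc m)"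
proof (rule G_I)
  have perm: "fst p permutes {1..Suc m}" using G_D(1)[OF pG] by (rule permutes_subset) auto
  have fn: "fst p (Suc m) = Suc m" using G_D(1)[OF pG] by (simp add: permutes_not_in)
  show "fst (insS r (Suc m) p c e) permutes {1..Suc m}" unfolding insS_fst[OF fn]
    using c by (intro permutes_compose[OF _ perm] permutes_swap_id) auto
  show "snd (insS r (Suc m) p c e) i < r" for i using G_D(2)[OF pG, of i] e by (auto simp: insS_def)
  show "snd (insS r (Suc m) p c e) i = 0" if "i \<notin> {1..Suc m}" for i
    using that c G_D(3)[OF pG, of i] by (auto simp: insS_def)
qed

lemma insS_pos: assumes pG: "p \<in> G r m" and c: "c \<in> {1..Suc m}" and e: "e < r"
  shows "inv (fst (insS r (Suc m) p c e)) (Suc m) = c"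
proof -
  have fn: "fst p (Suc m) = Suc m" using G_D(1)[OF pG] by (simp add: permutes_not_in)
  have "fst (insS r (Suc m) p c e) c = Suc m" using fn by (simp add: insS_def)
  then show ?thesis using G_D(1)[OF insS_G[OF assms]] by (metis permutes_inverses(2))
qed

lemma insS_col: assumes c: "c \<in> {1..Suc m}" shows "snd (insS r (Suc m) p c e) c = (r - e) mod r"
  by (simp add: insS_def)

lemma eS_inv: "e < r \<Longrightarrow> eS r ((r - e) mod r) = e"
  by (cases "e = 0") (auto simp: eS_def)

lemma delS_insS: assumes pG: "p \<in> G r m" and c: "c \<in> {1..Suc m}" and e: "e < r"
  shows "delS r (Suc m) (insS r (Suc m) p c e) = p"
proof -
  have fn: "fst p (Suc m) = Suc m" using G_D(1)[OF pG] by (simp add: permutes_not_in)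
  have sn: "snd p (Suc m) = 0" using G_D(3)[OF pG] by simp
  have sc: "snd p c < r" using G_D(2)[OF pG] .
  have ee: "(r - (r - e) mod r mod r) mod r = e" using eS_inv[OF e] by (simp add: eS_def)
  have ee2: "((snd p c + e) mod r + r - e) mod r = snd p c"
  proof -
    have "((snd p c + e) mod r + r - e) mod r = ((snd p c + e) mod r + (r - e)) mod r" using e by simp
    also have "\<dots> = (snd p c + e + (r - e)) mod r" by (simp add: mod_add_left_eq)
    also have "\<dots> = (snd p c + r) mod r" using e by simp
    finally show ?thesis using sc by simp
  qed
  show ?thesis unfolding delS_def insS_pos[OF assms] Let_def
    using fn sn ee ee2 c by (cases p) (auto simp: insS_def fun_eq_iff)
qed

lemma (in delSctx) insS_delS: "insS r (Suc m) p' c e = p"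
proof -
  have sn: "snd p (Suc m) < r" using G_D(2)[OF pG] .
  have ec: "(r - e) mod r = snd p c" using G_D(2)[OF pG, of c] by (cases "snd p c = 0") (auto simp: e_def eS_def)
  have e: "e < r" using r1 by (simp add: e_def eS_def)
  have ee2: "((snd p (Suc m) + r - e) mod r + e) mod r = snd p (Suc m)"
  proof -
    have "((snd p (Suc m) + r - e) mod r + e) mod r = (snd p (Suc m) + r - e + e) mod r" by (simp add: mod_add_left_eq)
    also have "\<dots> = (snd p (Suc m) + r) mod r" using e by simp
    finally show ?thesis using sn by simp
  qed
  show ?thesis
  proof (cases "c = Suc m")
    case True
    then show ?thesis using ec c by (intro prod_eqI) (auto simp: insS_def p'fst p'snd fun_eq_iff)
  next
    case False
    then show ?thesis using ec c ee2 by (intro prod_eqI) (auto simp: insS_def p'fst p'snd fun_eq_iff)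
  qed
qed

locale splice =
  fixes f g :: "'a \<Rightarrow> 'a" and P :: "'a \<Rightarrow> bool" and s :: 'a
  assumes A1: "\<And>x. \<not> P x \<Longrightarrow> g x = (if P (f x) then f (f x) else f x)"
    and A2: "\<And>x. \<not> P x \<Longrightarrow> P (f x) \<Longrightarrow> \<not> P (f (f x))"
    and A3: "\<not> P s"
begin

lemma fwd_aux: "(\<not> P ((f^^k) s) \<longrightarrow> (\<exists>k'. (g^^k') s = (f^^k) s \<and> (k' = 0 \<longleftrightarrow> k = 0) \<and>
      {(g^^l) s | l. 1 \<le> l \<and> l < k'} \<subseteq> {(f^^l) s | l. 1 \<le> l \<and> l < k})) \<and>
   (P ((f^^k) s) \<longrightarrow> k \<ge> 1 \<and> \<not> P ((f^^(k-1)) s))"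
proof (induction k rule: less_induct)
  case (less k)
  show ?case
  proof (cases k)
    case 0 then show ?thesis using A3 by (auto intro!: exI[of _ 0])
  next
    case (Suc j)
    have IHj: "(\<not> P ((f^^j) s) \<longrightarrow> (\<exists>k'. (g^^k') s = (f^^j) s \<and> (k' = 0 \<longleftrightarrow> j = 0) \<and>
      {(g^^l) s | l. 1 \<le> l \<and> l < k'} \<subseteq> {(f^^l) s | l. 1 \<le> l \<and> l < j})) \<and>
      (P ((f^^j) s) \<longrightarrow> j \<ge> 1 \<and> \<not> P ((f^^(j-1)) s))" using less Suc by auto
    have second: "P ((f^^k) s) \<longrightarrow> k \<ge> 1 \<and> \<not> P ((f^^(k-1)) s)"
    proof
      assume Pk: "P ((f^^k) s)"
      show "k \<ge> 1 \<and> \<not> P ((f^^(k-1)) s)"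
      proof (rule ccontr)
        assume "\<not> (k \<ge> 1 \<and> \<not> P ((f^^(k-1)) s))"
        then have Pj: "P ((f^^j) s)" using Suc by simp
        then have "j \<ge> 1" "\<not> P ((f^^(j-1)) s)" using IHj by auto
        then have "\<not> P (f (f ((f^^(j-1)) s)))" using A2 Pj by (metis Suc_diff_1 funpow.simps(2) o_apply less_le_trans zero_less_one)
        moreover have "f (f ((f^^(j-1)) s)) = (f^^k) s" using \<open>j \<ge> 1\<close> Suc
          by (metis Suc_diff_1 funpow.simps(2) o_apply less_le_trans zero_less_one)
        ultimately show False using Pk by simp
      qed
    qed
    have first: "\<not> P ((f^^k) s) \<longrightarrow> (\<exists>k'. (g^^k') s = (f^^k) s \<and> (k' = 0 \<longleftrightarrow> k = 0) \<and>
      {(g^^l) s | l. 1 \<le> l \<and> l < k'} \<subseteq> {(f^^l) s | l. 1 \<le> l \<and> l < k})"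
    proof
      assume nPk: "\<not> P ((f^^k) s)"
      show "\<exists>k'. (g^^k') s = (f^^k) s \<and> (k' = 0 \<longleftrightarrow> k = 0) \<and>
        {(g^^l) s | l. 1 \<le> l \<and> l < k'} \<subseteq> {(f^^l) s | l. 1 \<le> l \<and> l < k}"
      proof (cases "P ((f^^j) s)")
        case False
        then obtain k' where k': "(g^^k') s = (f^^j) s" "(k' = 0 \<longleftrightarrow> j = 0)"
          "{(g^^l) s | l. 1 \<le> l \<and> l < k'} \<subseteq> {(f^^l) s | l. 1 \<le> l \<and> l < j}" using IHj by blast
        have g1: "(g^^Suc k') s = (f^^k) s" using k'(1) A1[OF False] nPk Suc by simp
        have "{(g^^l) s | l. 1 \<le> l \<and> l < Suc k'} \<subseteq> {(f^^l) s | l. 1 \<le> l \<and> l < k}"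
        proof
          fix x assume "x \<in> {(g^^l) s | l. 1 \<le> l \<and> l < Suc k'}"
          then obtain l where l: "x = (g^^l) s" "1 \<le> l" "l < Suc k'" by auto
          show "x \<in> {(f^^l) s | l. 1 \<le> l \<and> l < k}"
          proof (cases "l = k'")
            case True then show ?thesis using l k' Suc by auto
          next
            case False then have "x \<in> {(g^^l) s | l. 1 \<le> l \<and> l < k'}" using l by auto
            then have "x \<in> {(f^^l) s | l. 1 \<le> l \<and> l < j}" using k'(3) by blast
            then show ?thesis using Suc by auto
          qed
        qed
        then show ?thesis using g1 Suc by (intro exI[of _ "Suc k'"]) auto
      next
        case True
        then have j1: "j \<ge> 1" and nP: "\<not> P ((f^^(j-1)) s)" using IHj by auto
        have "j - 1 < k" using Suc by simp
        then obtain k' where k': "(g^^k') s = (f^^(j-1)) s" "(k' = 0 \<longleftrightarrow> j - 1 = 0)"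
          "{(g^^l) s | l. 1 \<le> l \<and> l < k'} \<subseteq> {(f^^l) s | l. 1 \<le> l \<and> l < j - 1}" using less nP by blast
        have fj: "f ((f^^(j-1)) s) = (f^^j) s" using j1 by (metis Suc_diff_1 funpow.simps(2) o_apply less_le_trans zero_less_one)
        have g1: "(g^^Suc k') s = (f^^k) s" using k'(1) A1[OF nP] True fj Suc by simp
        have "{(g^^l) s | l. 1 \<le> l \<and> l < Suc k'} \<subseteq> {(f^^l) s | l. 1 \<le> l \<and> l < k}"
        proof
          fix x assume "x \<in> {(g^^l) s | l. 1 \<le> l \<and> l < Suc k'}"
          then obtain l where l: "x = (g^^l) s" "1 \<le> l" "l < Suc k'" by auto
          show "x \<in> {(f^^l) s | l. 1 \<le> l \<and> l < k}"
          proof (cases "l = k'")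
            case True then have "x = (f^^(j-1)) s" "j - 1 \<ge> 1" using l k' by auto
            then show ?thesis using Suc by (intro CollectI exI[of _ "j-1"]) auto
          next
            case False then have "x \<in> {(g^^l) s | l. 1 \<le> l \<and> l < k'}" using l by auto
            then have "x \<in> {(f^^l) s | l. 1 \<le> l \<and> l < j - 1}" using k'(3) by blast
            then show ?thesis using Suc by auto
          qed
        qed
        then show ?thesis using g1 Suc by (intro exI[of _ "Suc k'"]) auto
      qed
    qed
    show ?thesis using first second by blast
  qed
qed

lemma fwd: "\<not> P ((f^^k) s) \<Longrightarrow> \<exists>k'. (g^^k') s = (f^^k) s \<and> (k' = 0 \<longleftrightarrow> k = 0) \<and>
      {(g^^l) s | l. 1 \<le> l \<and> l < k'} \<subseteq> {(f^^l) s | l. 1 \<le> l \<and> l < k}"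
  using fwd_aux by blast

lemma bwd: "\<exists>k. (f^^k) s = (g^^k') s \<and> \<not> P ((f^^k) s) \<and> (k = 0 \<longleftrightarrow> k' = 0) \<and>
      {(f^^l) s | l. 1 \<le> l \<and> l < k} \<subseteq> {(g^^l) s | l. 1 \<le> l \<and> l < k'} \<union> Collect P"
proof (induction k')
  case 0 then show ?case using A3 by (auto intro!: exI[of _ 0])
next
  case (Suc k')
  then obtain k where k: "(f^^k) s = (g^^k') s" "\<not> P ((f^^k) s)" "(k = 0 \<longleftrightarrow> k' = 0)"
    "{(f^^l) s | l. 1 \<le> l \<and> l < k} \<subseteq> {(g^^l) s | l. 1 \<le> l \<and> l < k'} \<union> Collect P" by blast
  have gs: "(g^^Suc k') s = g ((f^^k) s)" using k(1) by simp
  have old: "(f^^k) s \<in> {(g^^l) s | l. 1 \<le> l \<and> l < Suc k'} \<union> Collect P" if "k \<ge> 1"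
    using k that by auto
  show ?case
  proof (cases "P (f ((f^^k) s))")
    case True
    have e: "(f^^Suc (Suc k)) s = (g^^Suc k') s" using gs A1[OF k(2)] True by simp
    have nP: "\<not> P ((f^^Suc (Suc k)) s)" using A2[OF k(2) True] by simp
    have "{(f^^l) s | l. 1 \<le> l \<and> l < Suc (Suc k)} \<subseteq> {(g^^l) s | l. 1 \<le> l \<and> l < Suc k'} \<union> Collect P"
    proof
      fix x assume "x \<in> {(f^^l) s | l. 1 \<le> l \<and> l < Suc (Suc k)}"
      then obtain l where l: "x = (f^^l) s" "1 \<le> l" "l < Suc (Suc k)" by auto
      consider "l < k" | "l = k" | "l = Suc k" using l by linarith
      then show "x \<in> {(g^^l) s | l. 1 \<le> l \<and> l < Suc k'} \<union> Collect P"
      proof cases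
        case 1 then have "x \<in> {(f^^l) s | l. 1 \<le> l \<and> l < k}" using l by auto
          then have "x \<in> {(g^^l) s | l. 1 \<le> l \<and> l < k'} \<union> Collect P" using k(4) by blast
          then show ?thesis by auto
      next
        case 2 then show ?thesis using l old by auto
      next
        case 3 then show ?thesis using l True by simp
      qed
    qed
    then show ?thesis using e nP by (intro exI[of _ "Suc (Suc k)"]) auto
  next
    case False
    have e: "(f^^Suc k) s = (g^^Suc k') s" using gs A1[OF k(2)] False by simp
    have nP: "\<not> P ((f^^Suc k) s)" using False by simp
    have "{(f^^l) s | l. 1 \<le> l \<and> l < Suc k} \<subseteq> {(g^^l) s | l. 1 \<le> l \<and> l < Suc k'} \<union> Collect P"
    proof
      fix x assume "x \<in> {(f^^l) s | l. 1 \<le> l \<and> l < Suc k}"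
      then obtain l where l: "x = (f^^l) s" "1 \<le> l" "l < Suc k" by auto
      consider "l < k" | "l = k" using l by linarith
      then show "x \<in> {(g^^l) s | l. 1 \<le> l \<and> l < Suc k'} \<union> Collect P"
      proof cases
        case 1 then have "x \<in> {(f^^l) s | l. 1 \<le> l \<and> l < k}" using l by auto
          then have "x \<in> {(g^^l) s | l. 1 \<le> l \<and> l < k'} \<union> Collect P" using k(4) by blast
          then show ?thesis by auto
      next
        case 2 then show ?thesis using l old by auto
      qed
    qed
    then show ?thesis using e nP by (intro exI[of _ "Suc k"]) auto
  qed
qed

end

lemma funpow_inj_on: assumes "f ` D \<subseteq> D" "inj_on f D"
  shows "x \<in> D \<Longrightarrow> y \<in> D \<Longrightarrow> (f^^a) x = (f^^a) y \<Longrightarrow> x = y"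
proof (induction a arbitrary: x y)
  case 0 then show ?case by simp
next
  case (Suc a)
  have "(f^^a) (f x) = (f^^a) (f y)" using Suc.prems(3) by (simp add: funpow_swap1)
  then have "f x = f y" using Suc.IH[of "f x" "f y"] Suc.prems assms(1) by auto
  then show ?case using assms(2) Suc.prems by (auto simp: inj_on_def)
qed

lemma funpow_in: "f ` D \<subseteq> D \<Longrightarrow> x \<in> D \<Longrightarrow> (f^^k) x \<in> D"
  by (induction k) auto

lemma period: assumes fin: "finite D" and fD: "f ` D \<subseteq> D" and inj: "inj_on f D" and s: "s \<in> D"
  shows "\<exists>M\<ge>1. (f^^M) s = s"
proof -
  have "range (\<lambda>k. (f^^k) s) \<subseteq> D" using funpow_in[OF fD s] by auto
  then have "finite (range (\<lambda>k. (f^^k) s))" using fin finite_subset by blast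
  then have "\<not> inj (\<lambda>k::nat. (f^^k) s)" using finite_imageD by auto
  then obtain a b where ab: "a \<noteq> b" "(f^^a) s = (f^^b) s" by (auto simp: inj_on_def)
  obtain u v where uv: "u < v" "(f^^u) s = (f^^v) s" using ab by (metis linorder_neqE_nat)
  have "(f^^u) ((f^^(v-u)) s) = (f^^(u + (v-u))) s" by (simp only: funpow_add o_apply)
  then have "(f^^u) s = (f^^u) ((f^^(v-u)) s)" using uv by simp
  then have "s = (f^^(v-u)) s" using funpow_inj_on[OF fD inj s funpow_in[OF fD s]] by blast
  then show ?thesis using uv by (intro exI[of _ "v-u"]) auto
qed

lemma corbit_self: "i \<in> corbit \<sigma> i" unfolding corbit_def by (auto intro: exI[of _ 0])

lemma corbit_step: "x \<in> corbit \<sigma> i \<Longrightarrow> \<sigma> x \<in> corbit \<sigma> i"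
proof -
  assume "x \<in> corbit \<sigma> i"
  then obtain k where "x = (\<sigma>^^k) i" unfolding corbit_def by auto
  then have "\<sigma> x = (\<sigma>^^(Suc k)) i" by simp
  then show ?thesis unfolding corbit_def by blast
qed

lemma corbit_trans: "b \<in> corbit \<sigma> a \<Longrightarrow> corbit \<sigma> b \<subseteq> corbit \<sigma> a"
proof
  fix y assume "b \<in> corbit \<sigma> a" "y \<in> corbit \<sigma> b"
  then obtain k j where "b = (\<sigma>^^k) a" "y = (\<sigma>^^j) b" unfolding corbit_def by auto
  then have "y = (\<sigma>^^(j + k)) a" by (simp only: funpow_add o_apply)
  then show "y \<in> corbit \<sigma> a" unfolding corbit_def by blast
qed

lemma corbit_sub: "\<sigma> permutes {1..n} \<Longrightarrow> i \<in> {1..n} \<Longrightarrow> corbit \<sigma> i \<subseteq> {1..n}"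
proof
  fix y assume a: "\<sigma> permutes {1..n}" "i \<in> {1..n}" "y \<in> corbit \<sigma> i"
  then obtain k where "y = (\<sigma>^^k) i" unfolding corbit_def by auto
  moreover have "\<sigma> ` {1..n} \<subseteq> {1..n}" using perm_in[OF a(1)] by blast
  ultimately show "y \<in> {1..n}" using funpow_in a(2) by metis
qed

lemma corbit_sym: assumes "\<sigma> permutes {1..n}" "a \<in> {1..n}" "b \<in> corbit \<sigma> a"
  shows "a \<in> corbit \<sigma> b"
proof -
  have fD: "\<sigma> ` {1..n} \<subseteq> {1..n}" using perm_in[OF assms(1)] by auto
  have inj: "inj_on \<sigma> {1..n}" using permutes_inj[OF assms(1)] by (simp add: inj_on_def inj_def)
  obtain M where M: "M \<ge> 1" "(\<sigma>^^M) a = a" using period[OF _ fD inj assms(2)] by auto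
  obtain k where k: "b = (\<sigma>^^k) a" using assms(3) unfolding corbit_def by auto
  have "(\<sigma>^^(M * k)) a = a"
  proof (induction k)
    case 0 then show ?case by simp
  next
    case (Suc k)
    have "(\<sigma>^^(M * Suc k)) a = (\<sigma>^^M) ((\<sigma>^^(M*k)) a)" by (simp only: mult_Suc_right funpow_add o_apply)
    then show ?case using M Suc by simp
  qed
  moreover have "M * k \<ge> k" using M by simp
  moreover have "(\<sigma>^^(M*k - k)) b = (\<sigma>^^(M*k - k + k)) a" using k by (simp only: funpow_add o_apply)
  ultimately have "(\<sigma>^^(M*k - k)) b = a" by simp
  then show ?thesis unfolding corbit_def by auto
qed

lemma corbit_eq: "\<sigma> permutes {1..n} \<Longrightarrow> a \<in> {1..n} \<Longrightarrow> b \<in> corbit \<sigma> a \<Longrightarrow> corbit \<sigma> b = corbit \<sigma> a"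
  using corbit_trans corbit_sym by (metis subset_antisym)

context delSctx
begin

lemma splice_sigma: assumes "i \<noteq> Suc m" shows "splice (fst p) (fst p') (\<lambda>x. x = Suc m) i"
proof
  show "fst p' x = (if fst p x = Suc m then fst p (fst p x) else fst p x)" if "x \<noteq> Suc m" for x
  proof (cases "x = c")
    case True then show ?thesis using that c by (simp add: p'fst)
  next
    case False
    then have "fst p x \<noteq> Suc m" using c perm_inj[OF perm] by metis
    then show ?thesis using False that by (simp add: p'fst)
  qed
  show "fst p (fst p x) \<noteq> Suc m" if "x \<noteq> Suc m" "fst p x = Suc m" for x
  proof -
    have "x = c" using that c perm_inj[OF perm] by metis
    then show ?thesis using that c perm_inj[OF perm] by metis
  qed
qed (use assms in simp)

lemma corb: assumes "i \<noteq> Suc m" shows "corbit (fst p') i = corbit (fst p) i - {Suc m}"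
proof -
  interpret sp: splice "fst p" "fst p'" "\<lambda>x. x = Suc m" i using splice_sigma[OF assms] .
  show ?thesis
  proof
    show "corbit (fst p') i \<subseteq> corbit (fst p) i - {Suc m}"
    proof
      fix y assume "y \<in> corbit (fst p') i"
      then obtain k' where "y = (fst p' ^^ k') i" unfolding corbit_def by auto
      moreover obtain k where "(fst p ^^ k) i = (fst p' ^^ k') i" "(fst p ^^ k) i \<noteq> Suc m" using sp.bwd[of k'] by blast
      ultimately have "(fst p ^^ k) i = y" "y \<noteq> Suc m" by auto
      then show "y \<in> corbit (fst p) i - {Suc m}" unfolding corbit_def by blast
    qed
    show "corbit (fst p) i - {Suc m} \<subseteq> corbit (fst p') i"
    proof
      fix y assume "y \<in> corbit (fst p) i - {Suc m}"
      then obtain k where "y = (fst p ^^ k) i" "y \<noteq> Suc m" unfolding corbit_def by auto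
      then obtain k' where "(fst p' ^^ k') i = y" using sp.fwd[of k] by auto
      then show "y \<in> corbit (fst p') i" unfolding corbit_def by blast
    qed
  qed
qed

end


lemma col_add: assumes "yc < r" shows "((yn + r - eS r yc) mod r + X) mod r = (yn + (yc + X)) mod r"
proof (cases "yc = 0")
  case True then show ?thesis by (simp add: eS_def mod_add_left_eq)
next
  case False
  then have "eS r yc = r - yc" using assms by (simp add: eS_def)
  then have "yn + r - eS r yc = yn + yc" using assms by simp
  then show ?thesis by (simp add: mod_add_left_eq add.assoc)
qed

context delSctx
begin

lemma orb_fin: "i \<in> {1..Suc m} \<Longrightarrow> finite (corbit (fst p) i)"
  using corbit_sub[OF perm] finite_subset by blast

lemma Cyc_K: assumes i: "i \<in> {1..m}"
  shows "(Min (corbit (fst p) i), (\<Sum>k\<in>corbit (fst p) i. snd p k) mod r) =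
         (Min (corbit (fst p') i), (\<Sum>k\<in>corbit (fst p') i. snd p' k) mod r)"
proof -
  let ?O = "corbit (fst p) i"
  have i1: "i \<in> {1..Suc m}" "i \<noteq> Suc m" using i by auto
  have O': "corbit (fst p') i = ?O - {Suc m}" using corb i1 by simp
  have fin: "finite ?O" using orb_fin[OF i1(1)] .
  have iO: "i \<in> ?O" by (rule corbit_self)
  have Osub: "?O \<subseteq> {1..Suc m}" using corbit_sub[OF perm i1(1)] .
  have "Min ?O \<le> i" using fin iO by simp
  then have "Min ?O \<in> ?O - {Suc m}" using Min_in[OF fin] iO i by auto
  then have mn: "Min (?O - {Suc m}) = Min ?O" using fin by (intro Min_eqI) auto
  have sm: "(\<Sum>k\<in>?O - {Suc m}. snd p' k) mod r = (\<Sum>k\<in>?O. snd p k) mod r"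
  proof (cases "Suc m \<in> ?O")
    case False
    have "c \<notin> ?O" using False corbit_step[of c "fst p" i] c by auto
    then have "(\<Sum>k\<in>?O - {Suc m}. snd p' k) = (\<Sum>k\<in>?O. snd p k)"
      using False by (intro sum.cong) (auto simp: p'snd)
    then show ?thesis by simp
  next
    case True
    have cn: "c \<noteq> Suc m"
    proof
      assume cn: "c = Suc m"
      have "fst p' = fst p" using cn c by (auto simp: p'fst)
      then have "?O = ?O - {Suc m}" using O' by simp
      then show False using True by blast
    qed
    have "corbit (fst p) (Suc m) = ?O" using corbit_eq[OF perm i1(1) True] .
    moreover have "Suc m \<in> corbit (fst p) c" using corbit_step[OF corbit_self[of c "fst p"]] c by simp
    then have "c \<in> corbit (fst p) (Suc m)" using corbit_sym[OF perm c(1)] by blast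
    ultimately have cO: "c \<in> ?O - {Suc m}" using cn by auto
    have s1a: "sum (snd p) ?O = snd p (Suc m) + sum (snd p) (?O - {Suc m})" using sum.remove[OF fin True] .
    have s1b: "sum (snd p) (?O - {Suc m}) = snd p c + sum (snd p) (?O - {Suc m} - {c})"
      using sum.remove[of "?O - {Suc m}" c "snd p"] fin cO by simp
    have s1: "(\<Sum>k\<in>?O. snd p k) = snd p (Suc m) + (snd p c + (\<Sum>k\<in>?O - {Suc m} - {c}. snd p k))"
      using s1a s1b by simp
    have s2: "(\<Sum>k\<in>?O - {Suc m}. snd p' k) = snd p' c + (\<Sum>k\<in>?O - {Suc m} - {c}. snd p' k)"
      using sum.remove[of "?O - {Suc m}" c "snd p'"] fin cO by simp
    have s3: "(\<Sum>k\<in>?O - {Suc m} - {c}. snd p' k) = (\<Sum>k\<in>?O - {Suc m} - {c}. snd p k)"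
      by (intro sum.cong) (auto simp: p'snd)
    have "snd p' c = (snd p (Suc m) + r - e) mod r" using cn by (simp add: p'snd)
    then have "(\<Sum>k\<in>?O - {Suc m}. snd p' k) mod r = ((snd p (Suc m) + r - eS r (snd p c)) mod r + (\<Sum>k\<in>?O - {Suc m} - {c}. snd p k)) mod r"
      using s2 s3 by (simp add: e_def)
    also have "\<dots> = (snd p (Suc m) + (snd p c + (\<Sum>k\<in>?O - {Suc m} - {c}. snd p k))) mod r"
      by (rule col_add[OF G_D(2)[OF pG, of c]])
    also have "\<dots> = (\<Sum>k\<in>?O. snd p k) mod r" using s1 by simp
    finally show ?thesis .
  qed
  show ?thesis using O' mn sm by simp
qed

lemma orb_n: assumes cn: "c = Suc m" shows "corbit (fst p) (Suc m) = {Suc m}"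
proof -
  have fx: "fst p (Suc m) = Suc m" using c(2) cn by simp
  have "((fst p)^^k) (Suc m) = Suc m" for k by (induction k) (simp_all add: fx)
  then show ?thesis unfolding corbit_def by auto
qed

lemma Cyc_n: assumes cn: "c = Suc m"
  shows "(Min (corbit (fst p) (Suc m)), (\<Sum>k\<in>corbit (fst p) (Suc m). snd p k) mod r) = (Suc m, snd p c)"
  using orb_n[OF cn] G_D(2)[OF pG, of "Suc m"] cn by simp

lemma Cyc_rec: "Cyc r (Suc m) p = Cyc r m p' \<union> (if c = Suc m then {(Suc m, snd p c)} else {})"
proof (rule set_eqI, rule iffI)
  fix x assume "x \<in> Cyc r (Suc m) p"
  then obtain i where i: "i \<in> {1..Suc m}" "x = (Min (corbit (fst p) i), (\<Sum>k\<in>corbit (fst p) i. snd p k) mod r)"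
    unfolding Cyc_def by auto
  show "x \<in> Cyc r m p' \<union> (if c = Suc m then {(Suc m, snd p c)} else {})"
  proof (cases "i = Suc m")
    case False
    then have im: "i \<in> {1..m}" using i by auto
    have "x = (Min (corbit (fst p') i), (\<Sum>k\<in>corbit (fst p') i. snd p' k) mod r)" using Cyc_K[OF im] i(2) by simp
    then have "x \<in> Cyc r m p'" unfolding Cyc_def using im by blast
    then show ?thesis by simp
  next
    case True
    show ?thesis
    proof (cases "c = Suc m")
      case cn: True
      have "x = (Suc m, snd p c)" using Cyc_n[OF cn] i(2) True by simp
      then show ?thesis using cn by simp
    next
      case cn: False
      have cm: "c \<in> {1..m}" using c cn by auto
      have "Suc m \<in> corbit (fst p) c" using corbit_step[OF corbit_self[of c "fst p"]] c by simp
      then have "corbit (fst p) (Suc m) = corbit (fst p) c" using corbit_eq[OF perm c(1)] by blast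
      then have "x = (Min (corbit (fst p) c), (\<Sum>k\<in>corbit (fst p) c. snd p k) mod r)" using True i by simp
      also have "\<dots> = (Min (corbit (fst p') c), (\<Sum>k\<in>corbit (fst p') c. snd p' k) mod r)" using Cyc_K[OF cm] .
      finally have "x \<in> Cyc r m p'" unfolding Cyc_def using cm by blast
      then show ?thesis by simp
    qed
  qed
next
  fix x assume "x \<in> Cyc r m p' \<union> (if c = Suc m then {(Suc m, snd p c)} else {})"
  then show "x \<in> Cyc r (Suc m) p"
  proof
    assume "x \<in> Cyc r m p'"
    then obtain i where i: "i \<in> {1..m}" "x = (Min (corbit (fst p') i), (\<Sum>k\<in>corbit (fst p') i. snd p' k) mod r)"
      unfolding Cyc_def by auto
    then have "x = (Min (corbit (fst p) i), (\<Sum>k\<in>corbit (fst p) i. snd p k) mod r)" using Cyc_K[OF i(1)] by simp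
    moreover have "i \<in> {1..Suc m}" using i by auto
    ultimately show ?thesis unfolding Cyc_def by blast
  next
    assume h: "x \<in> (if c = Suc m then {(Suc m, snd p c)} else {})"
    then have cn: "c = Suc m" by (auto split: if_splits)
    then have "x = (Min (corbit (fst p) (Suc m)), (\<Sum>k\<in>corbit (fst p) (Suc m). snd p k) mod r)"
      using h Cyc_n[OF cn] by simp
    then show ?thesis unfolding Cyc_def by fastforce
  qed
qed

end

lemma mm: assumes "t < r" "w < (r::nat)" shows "(w + t) mod r = (if w + t < r then w + t else w + t - r)"
  using assms by (simp add: mod_if)

lemma mod_add_inj: assumes a: "t < r" "t' < r" "(u + t) mod r = (u + t') mod (r::nat)" shows "t = t'"
proof -
  have r: "r > 0" using a by simp
  have "(u mod r + t) mod r = (u mod r + t') mod r" using a(3) by (simp add: mod_add_left_eq)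
  then show ?thesis using mm[OF a(1), of "u mod r"] mm[OF a(2), of "u mod r"] mod_less_divisor[OF r, of u] r a(1,2) by (auto split: if_splits)
qed

lemma cact_D: assumes pG: "p \<in> G r n" and r: "1 \<le> r"
  shows "cact r p ` ({1..n} \<times> {0..<r}) \<subseteq> {1..n} \<times> {0..<r}" "inj_on (cact r p) ({1..n} \<times> {0..<r})"
proof -
  have perm: "fst p permutes {1..n}" using G_D(1)[OF pG] .
  show "cact r p ` ({1..n} \<times> {0..<r}) \<subseteq> {1..n} \<times> {0..<r}"
    using perm_in[OF perm] r by (auto simp: cact_def)
  show "inj_on (cact r p) ({1..n} \<times> {0..<r})"
  proof (rule inj_onI)
    fix x y assume x: "x \<in> {1..n} \<times> {0..<r}" and y: "y \<in> {1..n} \<times> {0..<r}" and e: "cact r p x = cact r p y"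
    have 1: "fst x = fst y" using e perm_inj[OF perm] by (auto simp: cact_def)
    have "(snd p (fst x) + snd x) mod r = (snd p (fst x) + snd y) mod r" using e 1 by (simp add: cact_def)
    then have "snd x = snd y" using mod_add_inj x y by auto
    then show "x = y" using 1 by (simp add: prod_eq_iff)
  qed
qed

lemma Lmic_char: assumes pG: "p \<in> G r n" and r: "1 \<le> r" and n: "1 \<le> n"
  shows "Lmic r p = {x. \<exists>k\<ge>1. x = (cact r p ^^ k) (1, 0) \<and> (\<forall>l. 1 \<le> l \<and> l < k \<longrightarrow> fst x < fst ((cact r p ^^ l) (1, 0)))}"
proof -
  let ?f = "cact r p" and ?D = "{1..n} \<times> {0..<r}"
  have s: "(1::nat, 0::nat) \<in> ?D" using n r by auto
  obtain M where M: "M \<ge> 1" "(?f^^M) (1,0) = (1,0)" using period[OF _ cact_D[OF pG r] s] by auto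
  define m0 where "m0 = (LEAST m. 1 \<le> m \<and> (?f ^^ m) (1, 0) = (1, 0))"
  have m0: "1 \<le> m0" "(?f ^^ m0) (1, 0) = (1, 0)" using LeastI[of "\<lambda>m. 1 \<le> m \<and> (?f ^^ m) (1, 0) = (1, 0)" M] M
    by (auto simp: m0_def)
  have inD: "(?f ^^ k) (1,0) \<in> ?D" for k using funpow_in[OF cact_D(1)[OF pG r] s] .
  show ?thesis unfolding Lmic_def Let_def m0_def[symmetric]
  proof (rule set_eqI, rule iffI)
    fix x assume "x \<in> {(?f ^^ k) (1, 0) |k. 1 \<le> k \<and> k \<le> m0 \<and> (\<forall>l. 1 \<le> l \<and> l < k \<longrightarrow> fst ((?f ^^ k) (1, 0)) < fst ((?f ^^ l) (1, 0)))}"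
    then show "x \<in> {x. \<exists>k\<ge>1. x = (?f ^^ k) (1, 0) \<and> (\<forall>l. 1 \<le> l \<and> l < k \<longrightarrow> fst x < fst ((?f ^^ l) (1, 0)))}"
      by blast
  next
    fix x assume "x \<in> {x. \<exists>k\<ge>1. x = (?f ^^ k) (1, 0) \<and> (\<forall>l. 1 \<le> l \<and> l < k \<longrightarrow> fst x < fst ((?f ^^ l) (1, 0)))}"
    then obtain k where k: "k \<ge> 1" "x = (?f ^^ k) (1, 0)" "\<forall>l. 1 \<le> l \<and> l < k \<longrightarrow> fst x < fst ((?f ^^ l) (1, 0))" by blast
    have "k \<le> m0"
    proof (rule ccontr)
      assume "\<not> k \<le> m0"
      then have "fst x < 1" using k(3) m0 by force
      moreover have "fst x \<ge> 1" using inD[of k] k(2) by auto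
      ultimately show False by simp
    qed
    then show "x \<in> {(?f ^^ k) (1, 0) |k. 1 \<le> k \<and> k \<le> m0 \<and> (\<forall>l. 1 \<le> l \<and> l < k \<longrightarrow> fst ((?f ^^ k) (1, 0)) < fst ((?f ^^ l) (1, 0)))}"
      using k by blast
  qed
qed


context delSctx
begin

lemma splice_act: assumes m: "1 \<le> m"
  shows "splice (cact r p) (cact r p') (\<lambda>x. fst x = Suc m) (1, 0)"
proof
  fix x :: "nat \<times> nat" assume nP: "fst x \<noteq> Suc m"
  obtain a t where x: "x = (a, t)" by (cases x)
  show "cact r p' x = (if fst (cact r p x) = Suc m then cact r p (cact r p x) else cact r p x)"
  proof (cases "a = c")
    case True
    then have cn: "c \<noteq> Suc m" using nP x by simp
    have "((snd p (Suc m) + r - e) mod r + t) mod r = (snd p (Suc m) + (snd p c + t)) mod r"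
      unfolding e_def by (rule col_add[OF G_D(2)[OF pG]])
    also have "\<dots> = (snd p (Suc m) + (snd p c + t) mod r) mod r" by (simp add: mod_add_right_eq)
    finally show ?thesis using True x cn c by (simp add: cact_def p'fst p'snd)
  next
    case False
    then have "fst p a \<noteq> Suc m" using c perm_inj[OF perm] by metis
    then show ?thesis using False x nP by (simp add: cact_def p'fst p'snd)
  qed
next
  fix x :: "nat \<times> nat" assume nP: "fst x \<noteq> Suc m" and P: "fst (cact r p x) = Suc m"
  have "fst x = c" using P c perm_inj[OF perm] by (metis cact_def fst_conv)
  then have "c \<noteq> Suc m" using nP by simp
  then have "fst p (Suc m) \<noteq> Suc m" using c perm_inj[OF perm] by metis
  then show "fst (cact r p (cact r p x)) \<noteq> Suc m" using P by (simp add: cact_def)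
next
  show "fst (1::nat, 0::nat) \<noteq> Suc m" using m by simp
qed

lemma Lmic_rec: assumes m: "1 \<le> m"
  shows "Lmic r p = Lmic r p' \<union> (if c = 1 then {(Suc m, snd p 1)} else {})"
proof -
  interpret sp: splice "cact r p" "cact r p'" "\<lambda>x. fst x = Suc m" "(1, 0)" using splice_act[OF m] .
  let ?f = "cact r p" and ?g = "cact r p'" and ?s = "(1::nat, 0::nat)"
  have L1: "Lmic r p = {x. \<exists>k\<ge>1. x = (?f ^^ k) ?s \<and> (\<forall>l. 1 \<le> l \<and> l < k \<longrightarrow> fst x < fst ((?f ^^ l) ?s))}"
    using Lmic_char[OF pG r1] by simp
  have L2: "Lmic r p' = {x. \<exists>k\<ge>1. x = (?g ^^ k) ?s \<and> (\<forall>l. 1 \<le> l \<and> l < k \<longrightarrow> fst x < fst ((?g ^^ l) ?s))}"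
    using Lmic_char[OF p'G r1 m] by simp
  have sD: "?s \<in> {1..Suc m} \<times> {0..<r}" using r1 by auto
  have inD: "fst ((?f ^^ k) ?s) \<in> {1..Suc m}" for k using funpow_in[OF cact_D(1)[OF pG r1] sD, of k] by (auto simp: mem_Times_iff)
  have f1: "?f ?s = (fst p 1, snd p 1)" using G_D(2)[OF pG, of 1] by (simp add: cact_def)
  show ?thesis
  proof (rule set_eqI, rule iffI)
    fix x assume "x \<in> Lmic r p"
    then obtain k where k: "k \<ge> 1" "x = (?f ^^ k) ?s" "\<forall>l. 1 \<le> l \<and> l < k \<longrightarrow> fst x < fst ((?f ^^ l) ?s)"
      using L1 by blast
    show "x \<in> Lmic r p' \<union> (if c = 1 then {(Suc m, snd p 1)} else {})"
    proof (cases "fst x = Suc m")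
      case False
      then obtain k' where k': "(?g ^^ k') ?s = (?f ^^ k) ?s" "(k' = 0 \<longleftrightarrow> k = 0)"
        "{(?g ^^ l) ?s | l. 1 \<le> l \<and> l < k'} \<subseteq> {(?f ^^ l) ?s | l. 1 \<le> l \<and> l < k}"
        using sp.fwd[of k] k(2) by blast
      have "\<forall>l. 1 \<le> l \<and> l < k' \<longrightarrow> fst x < fst ((?g ^^ l) ?s)"
      proof (intro allI impI)
        fix l assume l: "1 \<le> l \<and> l < k'"
        then have "(?g ^^ l) ?s \<in> {(?f ^^ l) ?s | l. 1 \<le> l \<and> l < k}" using k'(3) by blast
        then show "fst x < fst ((?g ^^ l) ?s)" using k(3) by auto
      qed
      moreover have "k' \<ge> 1" using k'(2) k(1) by simp
      ultimately have "x \<in> Lmic r p'" unfolding L2 using k'(1) k(2) by auto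
      then show ?thesis by simp
    next
      case True
      have "k = 1"
      proof (rule ccontr)
        assume "k \<noteq> 1"
        then have "fst x < fst ((?f ^^ 1) ?s)" using k(1,3) by auto
        moreover have "fst ((?f ^^ 1) ?s) \<le> Suc m" using inD[of 1] by simp
        ultimately show False using True by simp
      qed
      then have x: "x = (fst p 1, snd p 1)" using k(2) f1 by simp
      then have "fst p 1 = fst p c" using True c by simp
      then have "c = 1" using perm_inj[OF perm] by metis
      then show ?thesis using x True by simp
    qed
  next
    fix x assume "x \<in> Lmic r p' \<union> (if c = 1 then {(Suc m, snd p 1)} else {})"
    then show "x \<in> Lmic r p"
    proof
      assume "x \<in> Lmic r p'"
      then obtain k' where k': "k' \<ge> 1" "x = (?g ^^ k') ?s" "\<forall>l. 1 \<le> l \<and> l < k' \<longrightarrow> fst x < fst ((?g ^^ l) ?s)"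
        using L2 by blast
      obtain k where k: "(?f ^^ k) ?s = (?g ^^ k') ?s" "fst ((?f ^^ k) ?s) \<noteq> Suc m" "(k = 0 \<longleftrightarrow> k' = 0)"
        "{(?f ^^ l) ?s | l. 1 \<le> l \<and> l < k} \<subseteq> {(?g ^^ l) ?s | l. 1 \<le> l \<and> l < k'} \<union> {y. fst y = Suc m}"
        using sp.bwd[of k'] by blast
      have xlt: "fst x < Suc m" using inD[of k] k(1,2) k'(2) by auto
      have "\<forall>l. 1 \<le> l \<and> l < k \<longrightarrow> fst x < fst ((?f ^^ l) ?s)"
      proof (intro allI impI)
        fix l assume l: "1 \<le> l \<and> l < k"
        then have "(?f ^^ l) ?s \<in> {(?g ^^ l) ?s | l. 1 \<le> l \<and> l < k'} \<union> {y. fst y = Suc m}" using k(4) by blast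
        then show "fst x < fst ((?f ^^ l) ?s)" using k'(3) xlt by auto
      qed
      moreover have "k \<ge> 1" using k(3) k'(1) by simp
      ultimately show "x \<in> Lmic r p" unfolding L1 using k(1) k'(2) by auto
    next
      assume h: "x \<in> (if c = 1 then {(Suc m, snd p 1)} else {})"
      then have c1: "c = 1" and x: "x = (Suc m, snd p 1)" by (auto split: if_splits)
      have "x = (?f ^^ 1) ?s" using x f1 c c1 by simp
      then show "x \<in> Lmic r p" unfolding L1 by auto
    qed
  qed
qed

lemma LRM_recS: "LRM (Suc m) p = {x \<in> LRM m p'. fst x < c} \<union> {(c, Suc m, snd p c)}"
proof (rule set_eqI, rule iffI)
  have slt: "fst p j < Suc m" if "j \<in> {1..Suc m}" "j \<noteq> c" for j
    using perm_in[OF perm that(1)] c perm_inj[OF perm] that(2) by (metis atLeastAtMost_iff le_neq_implies_less)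
  fix x assume "x \<in> LRM (Suc m) p"
  then obtain i where i: "i \<in> {1..Suc m}" "\<forall>j\<in>{1..<i}. fst p j < fst p i" "x = (i, fst p i, snd p i)"
    unfolding LRM_def by auto
  show "x \<in> {x \<in> LRM m p'. fst x < c} \<union> {(c, Suc m, snd p c)}"
  proof (cases "i = c")
    case True then show ?thesis using i c by simp
  next
    case False
    have ic: "i < c"
    proof (rule ccontr)
      assume "\<not> i < c" then have "c \<in> {1..<i}" using c False by auto
      then show False using i(2) c slt[OF i(1) False] by fastforce
    qed
    then have im: "i \<in> {1..m}" "i \<noteq> Suc m" using i c by auto
    have pi: "fst p' i = fst p i" "snd p' i = snd p i" using ic im by (auto simp: p'fst p'snd)
    have "\<forall>j\<in>{1..<i}. fst p' j < fst p' i"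
    proof
      fix j assume j: "j \<in> {1..<i}"
      then have "fst p' j = fst p j" using ic im by (auto simp: p'fst)
      then show "fst p' j < fst p' i" using i(2) j pi by auto
    qed
    then have "x \<in> LRM m p'" unfolding LRM_def using im i pi by (auto intro!: exI[of _ i])
    then show ?thesis using i ic by simp
  qed
next
  have slt: "fst p j < Suc m" if "j \<in> {1..Suc m}" "j \<noteq> c" for j
    using perm_in[OF perm that(1)] c perm_inj[OF perm] that(2) by (metis atLeastAtMost_iff le_neq_implies_less)
  fix x assume "x \<in> {x \<in> LRM m p'. fst x < c} \<union> {(c, Suc m, snd p c)}"
  then show "x \<in> LRM (Suc m) p"
  proof
    assume "x \<in> {x \<in> LRM m p'. fst x < c}"
    then obtain a where a: "a \<in> {1..m}" "\<forall>j\<in>{1..<a}. fst p' j < fst p' a" "x = (a, fst p' a, snd p' a)" "a < c"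
      unfolding LRM_def by auto
    have pa: "fst p' a = fst p a" "snd p' a = snd p a" using a by (auto simp: p'fst p'snd)
    have "\<forall>j\<in>{1..<a}. fst p j < fst p a"
    proof
      fix j assume j: "j \<in> {1..<a}"
      then have "fst p' j = fst p j" using a by (auto simp: p'fst)
      moreover have "fst p' j < fst p' a" using a(2) j by blast
      ultimately show "fst p j < fst p a" using pa by simp
    qed
    then show ?thesis unfolding LRM_def using a pa by (auto intro!: exI[of _ a])
  next
    assume h: "x \<in> {(c, Suc m, snd p c)}"
    have "\<forall>j\<in>{1..<c}. fst p j < fst p c" using c slt by auto
    then show ?thesis unfolding LRM_def using h c by (auto intro!: exI[of _ c])
  qed
qed

end

fun Phi :: "nat \<Rightarrow> nat \<Rightarrow> cperm \<Rightarrow> cperm" where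
  "Phi r 0 p = cone"
| "Phi r (Suc m) p = (let c = inv (fst p) (Suc m) in insS r (Suc m) (Phi r m (delL (Suc m) p)) c (snd p c))"

fun Psi :: "nat \<Rightarrow> nat \<Rightarrow> cperm \<Rightarrow> cperm" where
  "Psi r 0 p = cone"
| "Psi r (Suc m) p = (let c = inv (fst p) (Suc m) in insL (Suc m) (Psi r m (delS r (Suc m) p)) c (eS r (snd p c)))"

lemma G0: "p \<in> G r 0 \<Longrightarrow> p = cone"
proof -
  assume pG: "p \<in> G r 0"
  have "fst p = id" using G_D(1)[OF pG] by (simp add: fun_eq_iff permutes_not_in)
  moreover have "snd p = (\<lambda>_. 0)" using G_D(3)[OF pG] by auto
  ultimately show ?thesis by (cases p) (simp add: cone_def)
qed

lemma eS_lt: "1 \<le> r \<Longrightarrow> eS r z < r" by (simp add: eS_def)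

lemma Phi_G: assumes r: "1 \<le> r" shows "p \<in> G r n \<Longrightarrow> Phi r n p \<in> G r n"
proof (induction n arbitrary: p)
  case 0 then show ?case using cone_G[OF r] by simp
next
  case (Suc m)
  have c: "inv (fst p) (Suc m) \<in> {1..Suc m}" using posn[OF Suc.prems] by auto
  have "Phi r m (delL (Suc m) p) \<in> G r m" using Suc.IH[OF delL_G[OF Suc.prems]] .
  then show ?case using insS_G[OF _ c G_D(2)[OF Suc.prems]] by (simp add: Let_def)
qed

lemma Psi_G: assumes r: "1 \<le> r" shows "p \<in> G r n \<Longrightarrow> Psi r n p \<in> G r n"
proof (induction n arbitrary: p)
  case 0 then show ?case using cone_G[OF r] by simp
next
  case (Suc m)
  interpret d: delSctx r m p "inv (fst p) (Suc m)" "eS r (snd p (inv (fst p) (Suc m)))"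
    using Suc.prems r by unfold_locales auto
  have "Psi r m (delS r (Suc m) p) \<in> G r m" using Suc.IH d.p'G by (simp add: d.p'_def)
  then show ?case using insL_G[OF _ d.c(1) eS_lt[OF r]] by (simp add: Let_def)
qed

lemma Psi_Phi: assumes r: "1 \<le> r" shows "p \<in> G r n \<Longrightarrow> Psi r n (Phi r n p) = p"
proof (induction n arbitrary: p)
  case 0 then show ?case using G0[of p r] by simp
next
  case (Suc m)
  define c where "c = inv (fst p) (Suc m)"
  define z where "z = snd p c"
  define Q where "Q = Phi r m (delL (Suc m) p)"
  have c: "c \<in> {1..Suc m}" using posn[OF Suc.prems] by (auto simp: c_def)
  have z: "z < r" using G_D(2)[OF Suc.prems] by (simp add: z_def)
  have QG: "Q \<in> G r m" unfolding Q_def using Phi_G[OF r delL_G[OF Suc.prems]] .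
  have q: "Phi r (Suc m) p = insS r (Suc m) Q c z" by (simp add: Let_def Q_def c_def z_def)
  have "Psi r (Suc m) (insS r (Suc m) Q c z) = insL (Suc m) (Psi r m Q) c z"
    using insS_pos[OF QG c z] insS_col[OF c] eS_inv[OF z] delS_insS[OF QG c z] by (simp add: Let_def)
  also have "Psi r m Q = delL (Suc m) p" unfolding Q_def using Suc.IH[OF delL_G[OF Suc.prems]] .
  also have "insL (Suc m) (delL (Suc m) p) c z = p" using insL_delL[OF Suc.prems] by (simp add: c_def z_def)
  finally show ?case using q by simp
qed

lemma Phi_Psi: assumes r: "1 \<le> r" shows "p \<in> G r n \<Longrightarrow> Phi r n (Psi r n p) = p"
proof (induction n arbitrary: p)
  case 0 then show ?case using G0[of p r] by simp
next
  case (Suc m)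
  define c where "c = inv (fst p) (Suc m)"
  define e where "e = eS r (snd p c)"
  interpret d: delSctx r m p c e using Suc.prems r by unfold_locales (auto simp: c_def e_def)
  define Q where "Q = Psi r m (delS r (Suc m) p)"
  have e: "e < r" using eS_lt[OF r] by (simp add: e_def)
  have QG: "Q \<in> G r m" unfolding Q_def using Psi_G[OF r] d.p'G by (simp add: d.p'_def)
  have q: "Psi r (Suc m) p = insL (Suc m) Q c e" by (simp add: Let_def Q_def c_def e_def)
  have "Phi r (Suc m) (insL (Suc m) Q c e) = insS r (Suc m) (Phi r m Q) c e"
    using insL_pos[OF QG d.c(1) e] delL_insL[OF QG d.c(1) e] by (simp add: Let_def insL_def)
  also have "Phi r m Q = delS r (Suc m) p" unfolding Q_def using Suc.IH d.p'G by (simp add: d.p'_def)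
  also have "insS r (Suc m) (delS r (Suc m) p) c e = p" using d.insS_delS by (simp add: d.p'_def)
  finally show ?case using q by simp
qed

definition neg :: "nat \<Rightarrow> (nat \<times> nat) set \<Rightarrow> (nat \<times> nat) set" where
  "neg r S = (\<lambda>(k,t). (k, (r - t) mod r)) ` S"
definition neg3 :: "nat \<Rightarrow> (nat \<times> nat \<times> nat) set \<Rightarrow> (nat \<times> nat \<times> nat) set" where
  "neg3 r S = (\<lambda>(i,v,t). (i, v, (r - t) mod r)) ` S"

lemma negneg: "(z::nat) < r \<Longrightarrow> (r - (r - z) mod r) mod r = z"
  using eS_inv[of z r] by (simp add: eS_def)

lemma Lmic_one: assumes qG: "q \<in> G r 1" and r: "1 \<le> r" shows "Lmic r q = {(1, snd q 1)}"
proof -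
  let ?f = "cact r q" and ?s = "(1::nat, 0::nat)"
  have sD: "?s \<in> {1..1} \<times> {0..<r}" using r by auto
  have inD: "fst ((?f ^^ k) ?s) = 1" for k using funpow_in[OF cact_D(1)[OF qG r] sD, of k] by (auto simp: mem_Times_iff)
  have f1: "(?f ^^ 1) ?s = (1, snd q 1)"
  proof -
    have "fst q 1 = 1" using perm_in[OF G_D(1)[OF qG], of 1] by simp
    then show ?thesis using G_D(2)[OF qG, of 1] by (simp add: cact_def)
  qed
  have "Lmic r q = {x. \<exists>k\<ge>1. x = (?f ^^ k) ?s \<and> (\<forall>l. 1 \<le> l \<and> l < k \<longrightarrow> fst x < fst ((?f ^^ l) ?s))}"
    using Lmic_char[OF qG r] by simp
  also have "\<dots> = {(?f ^^ 1) ?s}"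
  proof (rule set_eqI, rule iffI)
    fix x assume "x \<in> {x. \<exists>k\<ge>1. x = (?f ^^ k) ?s \<and> (\<forall>l. 1 \<le> l \<and> l < k \<longrightarrow> fst x < fst ((?f ^^ l) ?s))}"
    then obtain k where k: "k \<ge> 1" "x = (?f ^^ k) ?s" "\<forall>l. 1 \<le> l \<and> l < k \<longrightarrow> fst x < fst ((?f ^^ l) ?s)" by blast
    have "k = 1"
    proof (rule ccontr)
      assume "k \<noteq> 1" then have "fst x < fst ((?f ^^ 1) ?s)" using k by auto
      then show False using inD[of k] inD[of 1] k(2) by simp
    qed
    then show "x \<in> {(?f ^^ 1) ?s}" using k by simp
  qed auto
  finally show ?thesis using f1 by simp
qed

lemma neg_Un: "neg r (A \<union> B) = neg r A \<union> neg r B" by (simp add: neg_def image_Un)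
lemma neg3_Un: "neg3 r (A \<union> B) = neg3 r A \<union> neg3 r B" by (simp add: neg3_def image_Un)
lemma img_filter: "(\<And>x. fst (f x) = fst x) \<Longrightarrow> f ` {x \<in> A. fst x < c} = {y \<in> f ` A. fst y < c}"
  by auto
lemma neg3_filter: "neg3 r {x \<in> A. fst x < c} = {x \<in> neg3 r A. fst x < c}"
  unfolding neg3_def by (rule img_filter) auto

lemma invariant: assumes r: "1 \<le> r"
  shows "p \<in> G r n \<Longrightarrow> lenf n p = sor r n (Phi r n p) \<and> Rmil n p = neg r (Cyc r n (Phi r n p)) \<and>
     (1 \<le> n \<longrightarrow> Lmil n p = neg r (Lmic r (Phi r n p))) \<and> LRM n p = neg3 r (LRM n (Phi r n p))"
proof (induction n arbitrary: p)
  case 0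
  have "lenf 0 p = 0" by (simp add: lenf_def invs_def csum_def)
  moreover have "sor r 0 (Phi r 0 p) = 0" by (simp add: sor_def)
  moreover have "Rmil 0 p = {}" "Cyc r 0 q = {}" "LRM 0 p = {}" "LRM 0 q = {}" for q
    by (auto simp: Rmil_def Cyc_def LRM_def)
  ultimately show ?case by (simp add: neg_def neg3_def)
next
  case (Suc m)
  note pG = Suc.prems
  define c where cdef: "c = inv (fst p) (Suc m)"
  define z where "z = snd p c"
  define p' where "p' = delL (Suc m) p"
  define Q where "Q = Phi r m p'"
  interpret L: delLctx r m p c using pG cdef by unfold_locales auto
  have p'G: "p' \<in> G r m" using L.p'G by (simp add: p'_def L.p'_def)
  have z: "z < r" using G_D(2)[OF pG] by (simp add: z_def)
  have QG: "Q \<in> G r m" unfolding Q_def using Phi_G[OF r p'G] .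
  define q where "q = insS r (Suc m) Q c z"
  have q: "Phi r (Suc m) p = q" by (simp add: Let_def Q_def cdef z_def p'_def q_def)
  have qc: "snd q c = (r - z) mod r" using insS_col[OF L.c(1)] by (simp add: q_def)
  interpret S: delSctx r m q c z
    using insS_G[OF QG L.c(1) z] r insS_pos[OF QG L.c(1) z] qc eS_inv[OF z] by unfold_locales (simp_all add: q_def)
  have Sp': "S.p' = Q" using delS_insS[OF QG L.c(1) z] unfolding q_def[symmetric] S.p'_def .
  have IH: "lenf m p' = sor r m Q" "Rmil m p' = neg r (Cyc r m Q)"
    "1 \<le> m \<Longrightarrow> Lmil m p' = neg r (Lmic r Q)" "LRM m p' = neg3 r (LRM m Q)"
    using Suc.IH[OF p'G] by (simp_all add: Q_def)
  have e1: "lenf (Suc m) p = sor r (Suc m) q"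
  proof -
    have "lenf (Suc m) p = lenf m p' + (if z = 0 then Suc m - c else (c - 1) + (Suc m + z - 1))"
      using L.lenf_rec by (simp add: p'_def L.p'_def z_def)
    moreover have "sor r (Suc m) q = (Suc m - c + (if z > 0 then 2 * (c - 1) + z else 0)) + sor r m Q"
      using S.sor_rec Sp' by simp
    moreover have "c \<ge> 1" "c \<le> Suc m" using L.c by auto
    ultimately show ?thesis using IH(1) by auto
  qed
  have e2: "Rmil (Suc m) p = neg r (Cyc r (Suc m) q)"
  proof -
    have "Rmil (Suc m) p = Rmil m p' \<union> (if c = Suc m then {(Suc m, z)} else {})"
      using L.Rmil_rec by (simp add: p'_def L.p'_def z_def)
    moreover have "Cyc r (Suc m) q = Cyc r m Q \<union> (if c = Suc m then {(Suc m, (r - z) mod r)} else {})"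
      using S.Cyc_rec Sp' qc by (cases "c = Suc m") auto
    ultimately show ?thesis using IH(2) negneg[OF z] by (simp add: neg_Un neg_def)
  qed
  have e3: "Lmil (Suc m) p = neg r (Lmic r q)"
  proof (cases "m = 0")
    case True
    have "Lmil (Suc m) p = Lmil m p' \<union> (if c = 1 then {(Suc m, z)} else {})"
      using L.Lmil_rec by (simp add: p'_def L.p'_def z_def)
    moreover have "Lmil 0 p' = {}" by (simp add: Lmil_def)
    moreover have "c = 1" using L.c True by simp
    moreover have "Lmic r q = {(1, snd q 1)}" using Lmic_one[of q r] S.pG True r by simp
    ultimately show ?thesis using True qc negneg[OF z] by (simp add: neg_def)
  next
    case False
    have "Lmil (Suc m) p = Lmil m p' \<union> (if c = 1 then {(Suc m, z)} else {})"
      using L.Lmil_rec by (simp add: p'_def L.p'_def z_def)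
    moreover have "Lmic r q = Lmic r Q \<union> (if c = 1 then {(Suc m, (r - z) mod r)} else {})"
      using S.Lmic_rec[of] False Sp' qc by (cases "c = 1") auto
    ultimately show ?thesis using IH(3) False negneg[OF z] by (simp add: neg_Un neg_def)
  qed
  have e4: "LRM (Suc m) p = neg3 r (LRM (Suc m) q)"
  proof -
    have "LRM (Suc m) p = {x \<in> LRM m p'. fst x < c} \<union> {(c, Suc m, z)}"
      using L.LRM_rec by (simp add: p'_def L.p'_def z_def)
    moreover have "LRM (Suc m) q = {x \<in> LRM m Q. fst x < c} \<union> {(c, Suc m, (r - z) mod r)}"
      using S.LRM_recS Sp' qc by simp
    moreover have "neg3 r {(c, Suc m, (r - z) mod r)} = {(c, Suc m, z)}" by (simp add: neg3_def negneg[OF z])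
    ultimately show ?thesis using IH(4) by (simp only: neg3_Un neg3_filter)
  qed
  show ?case using e1 e2 e3 e4 q by simp
qed

lemma colsec_neg: assumes "\<forall>x\<in>S. snd x < r" "t < r"
  shows "colsec (neg r S) t = colsec S ((r - t) mod r)"
proof (rule set_eqI)
  fix k
  have "(k, t) \<in> neg r S \<longleftrightarrow> (k, (r - t) mod r) \<in> S"
  proof
    assume "(k, t) \<in> neg r S"
    then obtain u where u: "(k, u) \<in> S" "(r - u) mod r = t" by (auto simp: neg_def)
    then have "u < r" using assms(1) by auto
    then have "(r - t) mod r = u" using u(2) negneg by blast
    then show "(k, (r - t) mod r) \<in> S" using u by simp
  next
    assume "(k, (r - t) mod r) \<in> S"
    moreover have "(r - (r - t) mod r) mod r = t" using negneg[OF assms(2)] .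
    ultimately show "(k, t) \<in> neg r S" unfolding neg_def by force
  qed
  then show "k \<in> colsec (neg r S) t \<longleftrightarrow> k \<in> colsec S ((r - t) mod r)" by (simp add: colsec_def)
qed

lemma Lmal_neg: "Lmal n p = neg r (Lmal n q)" if "LRM n p = neg3 r (LRM n q)"
  unfolding Lmal_LRM that neg3_def neg_def image_image by (rule image_cong) auto
lemma Lmap_neg: "Lmap n p = neg r (Lmap n q)" if "LRM n p = neg3 r (LRM n q)"
  unfolding Lmap_LRM that neg3_def neg_def image_image by (rule image_cong) auto

lemma col_Cyc: "1 \<le> r \<Longrightarrow> \<forall>x\<in>Cyc r n q. snd x < r" by (auto simp: Cyc_def)
lemma col_Lmal: "q \<in> G r n \<Longrightarrow> \<forall>x\<in>Lmal n q. snd x < r" by (auto simp: Lmal_def G_D(2))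
lemma col_Lmap: "q \<in> G r n \<Longrightarrow> \<forall>x\<in>Lmap n q. snd x < r" by (auto simp: Lmap_def G_D(2))
lemma col_Lmic: assumes qG: "q \<in> G r n" and r: "1 \<le> r" and n: "1 \<le> n" shows "\<forall>x\<in>Lmic r q. snd x < r"
proof
  fix x assume "x \<in> Lmic r q"
  then obtain k where "x = (cact r q ^^ k) (1, 0)" using Lmic_char[OF qG r n] by blast
  moreover have "(1::nat, 0::nat) \<in> {1..n} \<times> {0..<r}" using n r by auto
  ultimately show "snd x < r" using funpow_in[OF cact_D(1)[OF qG r]] by (auto simp: mem_Times_iff)
qed

lemma map_colsec: assumes "A = neg r B" "\<forall>x\<in>B. snd x < r"
  shows "map (\<lambda>t. colsec A t) [0..<r] = map (\<lambda>t. colsec B ((r - t) mod r)) [0..<r]"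
  using colsec_neg[OF assms(2)] assms(1) by simp

theorem corollary4p2:
  fixes r n :: nat
  assumes "1 \<le> r" and "1 \<le> n"
  shows "\<forall>v. card {p \<in> G r n.
              (clength r n p,
               map (\<lambda>t. colsec (Rmil n p) t) [0..<r],
               map (\<lambda>t. colsec (Lmil n p) t) [0..<r],
               map (\<lambda>t. colsec (Lmal n p) t) [0..<r],
               map (\<lambda>t. colsec (Lmap n p) t) [0..<r]) = v}
          = card {p \<in> G r n.
              (sor r n p,
               map (\<lambda>t. colsec (Cyc r n p) ((r - t) mod r)) [0..<r],
               map (\<lambda>t. colsec (Lmic r p) ((r - t) mod r)) [0..<r],
               map (\<lambda>t. colsec (Lmal n p) ((r - t) mod r)) [0..<r],
               map (\<lambda>t. colsec (Lmap n p) ((r - t) mod r)) [0..<r]) = v}"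

proof
  fix v
  have r: "1 \<le> r" using assms(1) .
  define A where "A = (\<lambda>p. (clength r n p,
               map (\<lambda>t. colsec (Rmil n p) t) [0..<r],
               map (\<lambda>t. colsec (Lmil n p) t) [0..<r],
               map (\<lambda>t. colsec (Lmal n p) t) [0..<r],
               map (\<lambda>t. colsec (Lmap n p) t) [0..<r]))"
  define B where "B = (\<lambda>p. (sor r n p,
               map (\<lambda>t. colsec (Cyc r n p) ((r - t) mod r)) [0..<r],
               map (\<lambda>t. colsec (Lmic r p) ((r - t) mod r)) [0..<r],
               map (\<lambda>t. colsec (Lmal n p) ((r - t) mod r)) [0..<r],
               map (\<lambda>t. colsec (Lmap n p) ((r - t) mod r)) [0..<r]))"
  have AB: "A p = B (Phi r n p)" if pG: "p \<in> G r n" for p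
  proof -
    let ?q = "Phi r n p"
    have qG: "?q \<in> G r n" using Phi_G[OF r pG] .
    note I = invariant[OF r pG]
    have 1: "clength r n p = sor r n ?q" using clength_lenf[OF r pG] I by simp
    have 2: "map (\<lambda>t. colsec (Rmil n p) t) [0..<r] = map (\<lambda>t. colsec (Cyc r n ?q) ((r - t) mod r)) [0..<r]"
      using map_colsec[OF _ col_Cyc[OF r]] I by blast
    have 3: "map (\<lambda>t. colsec (Lmil n p) t) [0..<r] = map (\<lambda>t. colsec (Lmic r ?q) ((r - t) mod r)) [0..<r]"
      using map_colsec[OF _ col_Lmic[OF qG r assms(2)]] I assms(2) by blast
    have 4: "map (\<lambda>t. colsec (Lmal n p) t) [0..<r] = map (\<lambda>t. colsec (Lmal n ?q) ((r - t) mod r)) [0..<r]"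
      using map_colsec[OF Lmal_neg col_Lmal[OF qG]] I by blast
    have 5: "map (\<lambda>t. colsec (Lmap n p) t) [0..<r] = map (\<lambda>t. colsec (Lmap n ?q) ((r - t) mod r)) [0..<r]"
      using map_colsec[OF Lmap_neg col_Lmap[OF qG]] I by blast
    show ?thesis unfolding A_def B_def using 1 2 3 4 5 by simp
  qed
  have img: "{p \<in> G r n. B p = v} = Phi r n ` {p \<in> G r n. A p = v}"
  proof
    show "Phi r n ` {p \<in> G r n. A p = v} \<subseteq> {p \<in> G r n. B p = v}"
      using AB Phi_G[OF r] by auto
    show "{p \<in> G r n. B p = v} \<subseteq> Phi r n ` {p \<in> G r n. A p = v}"
    proof
      fix q assume q: "q \<in> {p \<in> G r n. B p = v}"
      then have "Psi r n q \<in> G r n" "Phi r n (Psi r n q) = q" using Psi_G[OF r] Phi_Psi[OF r] by auto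
      then show "q \<in> Phi r n ` {p \<in> G r n. A p = v}" using AB q by (metis (mono_tags, lifting) image_eqI mem_Collect_eq)
    qed
  qed
  have inj: "inj_on (Phi r n) {p \<in> G r n. A p = v}"
    by (rule inj_onI) (metis (no_types, lifting) Psi_Phi[OF r] mem_Collect_eq)
  have "card {p \<in> G r n. B p = v} = card {p \<in> G r n. A p = v}" unfolding img using card_image[OF inj] .
  then show "card {p \<in> G r n. A p = v} = card {p \<in> G r n. B p = v}" unfolding A_def B_def by simp
qed

end
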